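(* Consider $N\ge2$ heterogeneous agents $x_i(k+1)=A_ix_i(k)+B_iu_i(k)$, $y_i(k)=C_ix_i(k)$, with $x_i\in\mathbb{R}^{n_i}$, $u_i\in\mathbb{R}^{m_i}$, $y_i\in\mathbb{R}^p$, and local (introspective) measurement $z_i(k)=C_i^m x_i(k)$, where for each $i$: $(A_i,B_i)$ is stabilizable, $(C_i,A_i)$ is detectable, $(C_i,A_i,B_i)$ is right-invertible, and $(C_i^m,A_i)$ is detectable. Let $(C,A,B)$ be a triple with $\operatorname{rank}C=p$, invertible of uniform rank $n_q\ge\bar n_d$ (the maximal order of infinite zeros of the $(C_i,A_i,B_i)$), without invariant zeros, and with all eigenvalues of $A$ in the closed unit disc. Suppose that for each $i$ a pre-compensator $\xi_i(k+1)=A_{i,h}\xi_i(k)+B_{i,h}z_i(k)+E_{i,h}v_i(k)$, $u_i(k)=C_{i,h}\xi_i(k)+D_{i,h}v_i(k)$ is given such that the interconnection with agent $i$ can be written as $\bar x_i(k+1)=A\bar x_i(k)+B(v_i(k)+d_i(k))$, $y_i(k)=C\bar x_i(k)$, where $\omega_i(k+1)=A_{i,s}\omega_i(k)$, $d_i(k)=C_{i,s}\omega_i(k)$ with $A_{i,s}$ Schur stable. Let $K$, $H$ be such that $A-BK$ and $A-HC$ are Schur stable, and apply to each agent the protocol $$\begin{aligned}\xi_i(k+1)&=A_{i,h}\xi_i(k)+B_{i,h}z_i(k)-E_{i,h}K\eta_i(k),\\ \hat x_i(k+1)&=A\hat x_i(k)-BK\hat\zeta_i(k)+H(\zeta_i(k)-C\hat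 x_i(k)),\\ \eta_i(k+1)&=(A-BK)\eta_i(k)+A\hat x_i(k)-A\hat\zeta_i(k),\\ u_i(k)&=C_{i,h}\xi_i(k)-D_{i,h}K\eta_i(k),\end{aligned}$$ with $\zeta_i(k)=\sum_{j}d_{ij}(y_i(k)-y_j(k))$ and $\hat\zeta_i(k)=\sum_j d_{ij}(\eta_i(k)-\eta_j(k))$. Then for every $N$, every weighted directed graph on $N$ nodes containing a directed spanning tree, and all initial conditions, output synchronization holds: $\lim_{k\to\infty}(y_i(k)-y_j(k))=0$ for all $i,j$.
   Context: The network is a weighted directed graph with adjacency matrix $[a_{ij}]$, $a_{ij}\ge0$, $a_{ii}=0$ ($a_{ij}>0$ means an edge from $j$ to $i$); weighted in-degree $d_{in}(i)=\sum_j a_{ij}$; $d_{ij}=a_{ij}/(1+d_{in}(i))$ for $j\ne i$, $d_{ii}=1/(1+d_{in}(i))$. Schur stable means all eigenvalues in the open unit disc. Right-invertibility of $(C_i,A_i,B_i)$ means every reference output can be produced by suitable initial condition and input. A directed spanning tree is a subgraph containing all nodes in which every node except one root has exactly one parent. *)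

theory Defs
  imports "Jordan_Normal_Form.Char_Poly" "Jordan_Normal_Form.DL_Rank"
begin

definition schur_stable :: "real mat \<Rightarrow> bool" where
  "schur_stable M \<longleftrightarrow> square_mat M \<and>
     (\<forall>ev. eigenvalue (map_mat complex_of_real M) ev \<longrightarrow> cmod ev < 1)"

definition stabilizable :: "real mat \<Rightarrow> real mat \<Rightarrow> bool" where
  "stabilizable A B \<longleftrightarrow> (\<exists>F. F \<in> carrier_mat (dim_col B) (dim_row A) \<and> schur_stable (A + B * F))"

definition detectable :: "real mat \<Rightarrow> real mat \<Rightarrow> bool" where
  "detectable C A \<longleftrightarrow> (\<exists>L. L \<in> carrier_mat (dim_row A) (dim_row C) \<and> schur_stable (A + L * C))"

definition right_invertible :: "real mat \<Rightarrow> real mat \<Rightarrow> real mat \<Rightarrow> bool" where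
  "right_invertible C A B \<longleftrightarrow>
     (\<forall>yr :: nat \<Rightarrow> real vec. (\<forall>k. yr k \<in> carrier_vec (dim_row C)) \<longrightarrow>
        (\<exists>x u. x 0 \<in> carrier_vec (dim_row A) \<and> (\<forall>k. u k \<in> carrier_vec (dim_col B)) \<and>
               (\<forall>k. x (Suc k) = A *\<^sub>v x k + B *\<^sub>v u k) \<and>
               (\<forall>k. C *\<^sub>v x k = yr k)))"

definition invertible_uniform_rank :: "real mat \<Rightarrow> real mat \<Rightarrow> real mat \<Rightarrow> nat \<Rightarrow> bool" where
  "invertible_uniform_rank C A B nq \<longleftrightarrow>
     dim_row C = dim_col B \<and> nq \<ge> 1 \<and>
     (\<forall>j < nq - 1. C * (A ^\<^sub>m j) * B = 0\<^sub>m (dim_row C) (dim_col B)) \<and>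
     det (C * (A ^\<^sub>m (nq - 1)) * B) \<noteq> 0"

definition rosenbrock :: "real mat \<Rightarrow> real mat \<Rightarrow> real mat \<Rightarrow> complex \<Rightarrow> complex mat" where
  "rosenbrock C A B z = four_block_mat
      (z \<cdot>\<^sub>m 1\<^sub>m (dim_row A) - map_mat complex_of_real A) (- map_mat complex_of_real B)
      (map_mat complex_of_real C) (0\<^sub>m (dim_row C) (dim_col B))"

definition rosenbrock_rank :: "real mat \<Rightarrow> real mat \<Rightarrow> real mat \<Rightarrow> complex \<Rightarrow> nat" where
  "rosenbrock_rank C A B z = vec_space.rank (dim_row A + dim_row C) (rosenbrock C A B z)"

definition normal_rank :: "real mat \<Rightarrow> real mat \<Rightarrow> real mat \<Rightarrow> nat" where
  "normal_rank C A B = Max (range (rosenbrock_rank C A B))"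

definition invariant_zero :: "real mat \<Rightarrow> real mat \<Rightarrow> real mat \<Rightarrow> complex \<Rightarrow> bool" where
  "invariant_zero C A B z \<longleftrightarrow> rosenbrock_rank C A B z < normal_rank C A B"

text \<open>Block lower-triangular Toeplitz matrix of the Markov parameters C A^(j-1) B, j = 1..k.\<close>
definition markov_toeplitz :: "real mat \<Rightarrow> real mat \<Rightarrow> real mat \<Rightarrow> nat \<Rightarrow> real mat" where
  "markov_toeplitz C A B k =
     (let p = dim_row C; m = dim_col B in
      mat (k * p) (k * m) (\<lambda>(r, c). let a = r div p; b = c div m in
         if b \<le> a then (C * (A ^\<^sub>m (a - b)) * B) $$ (r mod p, c mod m) else 0))"

definition toeplitz_rank :: "real mat \<Rightarrow> real mat \<Rightarrow> real mat \<Rightarrow> nat \<Rightarrow> nat" where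
  "toeplitz_rank C A B k = vec_space.rank (k * dim_row C) (markov_toeplitz C A B k)"

text \<open>Number of infinite zeros of order at most k (structure at infinity, via Toeplitz ranks).\<close>
definition inf_zeros_upto :: "real mat \<Rightarrow> real mat \<Rightarrow> real mat \<Rightarrow> nat \<Rightarrow> nat" where
  "inf_zeros_upto C A B k =
     (if k = 0 then 0 else toeplitz_rank C A B k - toeplitz_rank C A B (k - 1))"

definition max_inf_zero_order :: "real mat \<Rightarrow> real mat \<Rightarrow> real mat \<Rightarrow> nat" where
  "max_inf_zero_order C A B =
     (LEAST k. \<forall>j\<ge>k. inf_zeros_upto C A B j = inf_zeros_upto C A B k)"

text \<open>a i j > 0 means an edge from j to i. A directed spanning tree: a root r and a parent
  map on the other nodes along existing edges such that every node reaches the root.\<close>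
definition has_directed_spanning_tree :: "nat \<Rightarrow> (nat \<Rightarrow> nat \<Rightarrow> real) \<Rightarrow> bool" where
  "has_directed_spanning_tree N a \<longleftrightarrow>
     (\<exists>r < N. \<exists>par :: nat \<Rightarrow> nat.
        (\<forall>i < N. i \<noteq> r \<longrightarrow> par i < N \<and> a i (par i) > 0) \<and>
        (\<forall>i < N. \<exists>k. (par ^^ k) i = r \<and> (\<forall>l < k. (par ^^ l) i \<noteq> r)))"

definition in_degree :: "nat \<Rightarrow> (nat \<Rightarrow> nat \<Rightarrow> real) \<Rightarrow> nat \<Rightarrow> real" where
  "in_degree N a i = (\<Sum>j<N. a i j)"

definition dcoef :: "nat \<Rightarrow> (nat \<Rightarrow> nat \<Rightarrow> real) \<Rightarrow> nat \<Rightarrow> nat \<Rightarrow> real" where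
  "dcoef N a i j = (if j = i then 1 / (1 + in_degree N a i) else a i j / (1 + in_degree N a i))"

text \<open>The interconnection of agent (Ai,Bi,Ci,Cmi) with the pre-compensator
  (Ah,Bh,Eh,Ch,Dh) (input v, output y) is, after an invertible change of state coordinates
  (xbar; omega) = T (x; xi), of the form
  xbar+ = A xbar + B (v + Cs omega), omega+ = As omega, y = C xbar.\<close>
definition interconnection_form ::
  "real mat \<Rightarrow> real mat \<Rightarrow> real mat \<Rightarrow> real mat \<Rightarrow>
   real mat \<Rightarrow> real mat \<Rightarrow> real mat \<Rightarrow> real mat \<Rightarrow> real mat \<Rightarrow>
   real mat \<Rightarrow> real mat \<Rightarrow> real mat \<Rightarrow> real mat \<Rightarrow> real mat \<Rightarrow> bool" where
  "interconnection_form Ai Bi Ci Cmi Ah Bh Eh Ch Dh A B C As Cs \<longleftrightarrow>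
     (let ni = dim_row Ai; si = dim_row Ah; nA = dim_row A; ri = dim_row As;
          mA = dim_col B; p = dim_row C;
          Atil = four_block_mat Ai (Bi * Ch) (Bh * Cmi) Ah;
          Btil = mat (ni + si) mA (\<lambda>(r, c). if r < ni then (Bi * Dh) $$ (r, c) else Eh $$ (r - ni, c));
          Ctil = mat p (ni + si) (\<lambda>(r, c). if c < ni then Ci $$ (r, c) else 0);
          Abar = four_block_mat A (B * Cs) (0\<^sub>m ri nA) As;
          Bbar = mat (nA + ri) mA (\<lambda>(r, c). if r < nA then B $$ (r, c) else 0);
          Cbar = mat p (nA + ri) (\<lambda>(r, c). if c < nA then C $$ (r, c) else 0)
      in nA + ri = ni + si \<and>
         (\<exists>T. T \<in> carrier_mat (ni + si) (ni + si) \<and> invertible_mat T \<and>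
              T * Atil = Abar * T \<and> T * Btil = Bbar \<and> Ctil = Cbar * T))"

end

theory Submission
  imports Defs "Jordan_Normal_Form.Spectral_Radius"
begin

lemma eigenvalue_smult:
  assumes "eigenvalue (A :: complex mat) ev" and A: "A \<in> carrier_mat n n"
  shows "eigenvalue (c \<cdot>\<^sub>m A) (c * ev)"
proof -
  from assms obtain v where v: "eigenvector A v ev" unfolding eigenvalue_def by auto
  hence vc: "v \<in> carrier_vec (dim_row A)" and nz: "v \<noteq> 0\<^sub>v (dim_row A)" and e: "A *\<^sub>v v = ev \<cdot>\<^sub>v v"
    unfolding eigenvector_def by auto
  have "(c \<cdot>\<^sub>m A) *\<^sub>v v = (c * ev) \<cdot>\<^sub>v v"
  proof (rule eq_vecI)
    fix i assume i: "i < dim_vec ((c * ev) \<cdot>\<^sub>v v)"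
    have "((c \<cdot>\<^sub>m A) *\<^sub>v v) $ i = c * ((A *\<^sub>v v) $ i)"
      using i vc A by (auto simp: scalar_prod_def sum_distrib_left mult.assoc intro!: sum.cong)
    also have "\<dots> = ((c * ev) \<cdot>\<^sub>v v) $ i" using e i vc by simp
    finally show "((c \<cdot>\<^sub>m A) *\<^sub>v v) $ i = ((c * ev) \<cdot>\<^sub>v v) $ i" .
  qed (insert vc, auto)
  thus ?thesis using vc nz unfolding eigenvalue_def eigenvector_def by (intro exI[of _ v]) auto
qed

lemma smult_smult_mat': "(a :: 'a :: comm_ring_1) \<cdot>\<^sub>m (b \<cdot>\<^sub>m A) = (a * b) \<cdot>\<^sub>m A"
  by (rule eq_matI) (auto simp: mult.assoc)

lemma one_smult_mat': "(1 :: 'a :: comm_ring_1) \<cdot>\<^sub>m A = A"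
  by (rule eq_matI) auto

lemma smult_pow_mat: assumes "(A :: 'a :: comm_ring_1 mat) \<in> carrier_mat n n"
  shows "(c \<cdot>\<^sub>m A) ^\<^sub>m k = (c ^ k) \<cdot>\<^sub>m (A ^\<^sub>m k)"
proof (induct k)
  case 0 thus ?case using assms by (auto simp: mat_eq_iff)
next
  case (Suc k)
  have "(c \<cdot>\<^sub>m A) ^\<^sub>m Suc k = ((c ^ k) \<cdot>\<^sub>m (A ^\<^sub>m k)) * (c \<cdot>\<^sub>m A)" using Suc by simp
  also have "\<dots> = (c ^ Suc k) \<cdot>\<^sub>m (A ^\<^sub>m Suc k)"
    by (rule eq_matI) (use assms in \<open>auto simp: scalar_prod_def sum_distrib_left algebra_simps intro!: sum.cong\<close>)
  finally show ?case .
qed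

lemma real_pow_bound:
  fixes M :: "real mat"
  assumes M: "M \<in> carrier_mat n n" and R: "R > 0"
    and ev: "\<And>ev. eigenvalue (map_mat complex_of_real M) ev \<Longrightarrow> cmod ev \<le> R"
  shows "\<exists>c1 c2. \<forall>k i j. i < n \<longrightarrow> j < n \<longrightarrow> \<bar>(M ^\<^sub>m k) $$ (i, j)\<bar> \<le> R ^ k * (c1 + c2 * real k ^ (n - 1))"
proof -
  define Mc where "Mc = map_mat complex_of_real M"
  define N where "N = (complex_of_real (1 / R)) \<cdot>\<^sub>m Mc"
  have Mc: "Mc \<in> carrier_mat n n" using M unfolding Mc_def by auto
  have Nc: "N \<in> carrier_mat n n" using Mc unfolding N_def by auto
  show ?thesis
  proof (cases "n = 0")
    case True thus ?thesis by auto
  next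
    case False
  have sr: "spectral_radius N \<le> 1"
  proof -
    from spectral_radius_mem_max(1)[OF Nc] False obtain e where
      e: "e \<in> spectrum N" and eq: "spectral_radius N = norm e" by auto
    from e have "eigenvalue N e" unfolding spectrum_def by auto
    from eigenvalue_smult[OF this Nc, of "complex_of_real R"]
    have "eigenvalue Mc (complex_of_real R * e)"
      unfolding N_def using R Mc by (simp add: smult_smult_mat' one_smult_mat')
    from ev[folded Mc_def, OF this] have "R * cmod e \<le> R" using R by (simp add: norm_mult)
    thus ?thesis using eq R by simp
  qed
  from spectral_radius_jnf_norm_bound_le_1_upper_triangular[OF Nc sr]
  obtain c1 c2 where b: "\<forall>k. norm_bound (N ^\<^sub>m k) (c1 + c2 * of_nat k ^ (n - 1))" by auto
  show ?thesis
  proof (intro exI allI impI)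
    fix k i j assume i: "i < n" and j: "j < n"
    have "N ^\<^sub>m k = (complex_of_real (1/R) ^ k) \<cdot>\<^sub>m (Mc ^\<^sub>m k)"
      unfolding N_def by (rule smult_pow_mat[OF Mc])
    also have "Mc ^\<^sub>m k = map_mat complex_of_real (M ^\<^sub>m k)"
      unfolding Mc_def by (rule of_real_hom.mat_hom_pow[OF M, symmetric])
    finally have Nk: "N ^\<^sub>m k = (complex_of_real (1/R) ^ k) \<cdot>\<^sub>m map_mat complex_of_real (M ^\<^sub>m k)" .
    have "norm ((N ^\<^sub>m k) $$ (i,j)) \<le> c1 + c2 * of_nat k ^ (n - 1)"
      using b[rule_format, of k] i j Nc unfolding norm_bound_def by auto
    moreover have "norm ((N ^\<^sub>m k) $$ (i,j)) = (1/R)^k * \<bar>(M ^\<^sub>m k) $$ (i, j)\<bar>"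
      unfolding Nk using i j M R by (simp add: norm_mult norm_power norm_divide)
    ultimately have "(1/R)^k * \<bar>(M ^\<^sub>m k) $$ (i, j)\<bar> \<le> c1 + c2 * real k ^ (n - 1)" by simp
    hence "R^k * ((1/R)^k * \<bar>(M ^\<^sub>m k) $$ (i, j)\<bar>) \<le> R^k * (c1 + c2 * real k ^ (n - 1))"
      using R by (intro mult_left_mono) auto
    thus "\<bar>(M ^\<^sub>m k) $$ (i, j)\<bar> \<le> R ^ k * (c1 + c2 * real k ^ (n - 1))"
      using R by (simp add: power_one_over field_simps)
  qed
  qed
qed

lemma summable_poly_geo:
  fixes \<beta> :: real
  assumes b0: "0 \<le> \<beta>" and b1: "\<beta> < 1"
  shows "summable (\<lambda>m. real (Suc m) ^ p * \<beta> ^ m)"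
proof (cases "\<beta> = 0")
  case True
  have "summable (\<lambda>m. if m = 0 then (1::real) else 0)" by simp
  moreover have "(\<lambda>m. real (Suc m) ^ p * \<beta> ^ m) = (\<lambda>m. if m = 0 then (1::real) else 0)"
    using True by (auto simp: fun_eq_iff)
  ultimately show ?thesis by simp
next
  case False
  hence bp: "\<beta> > 0" using b0 by simp
  define c where "c = (1 + \<beta>) / 2"
  have c1: "c < 1" using b1 unfolding c_def by simp
  have lim: "(\<lambda>n. (1 + 1 / real (Suc n)) ^ p) \<longlonglongrightarrow> 1"
  proof -
    have "(\<lambda>n. 1 / real (Suc n)) \<longlonglongrightarrow> (0::real)" using LIMSEQ_Suc[OF lim_const_over_n[of 1]] by simp
    hence "(\<lambda>n. 1 + 1 / real (Suc n)) \<longlonglongrightarrow> (1::real)" using tendsto_add[of "\<lambda>_. 1" 1 sequentially] by fastforce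
    from tendsto_power[OF this, of p] show ?thesis by simp
  qed
  have "(1::real) < (1 + \<beta>) / (2 * \<beta>)" using b1 bp by (simp add: field_simps)
  from order_tendstoD(2)[OF lim this] obtain N where
    N: "\<And>n. n \<ge> N \<Longrightarrow> (1 + 1 / real (Suc n)) ^ p < (1 + \<beta>) / (2 * \<beta>)"
    unfolding eventually_sequentially by blast
  show ?thesis
  proof (rule summable_ratio_test[OF c1, of N])
    fix n assume n: "n \<ge> N"
    have eq: "real (Suc (Suc n)) = real (Suc n) * (1 + 1 / real (Suc n))"
      by (simp add: field_simps)
    have e2: "real (Suc (Suc n)) ^ p = real (Suc n) ^ p * (1 + 1 / real (Suc n)) ^ p"
      unfolding eq by (rule power_mult_distrib)
    have "norm (real (Suc (Suc n)) ^ p * \<beta> ^ Suc n) =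
          (1 + 1 / real (Suc n)) ^ p * \<beta> * (real (Suc n) ^ p * \<beta> ^ n)"
      using bp unfolding e2 by (simp add: abs_mult algebra_simps)
    also have "\<dots> \<le> ((1 + \<beta>) / (2 * \<beta>)) * \<beta> * (real (Suc n) ^ p * \<beta> ^ n)"
      using N[OF n] bp by (intro mult_right_mono) auto
    also have "\<dots> = c * norm (real (Suc n) ^ p * \<beta> ^ n)"
      using bp unfolding c_def by simp
    finally show "norm (real (Suc (Suc n)) ^ p * \<beta> ^ Suc n) \<le> c * norm (real (Suc n) ^ p * \<beta> ^ n)" .
  qed
qed

lemma summable_poly_geo':
  fixes \<beta> :: real
  assumes b0: "0 \<le> \<beta>" and b1: "\<beta> < 1"
  shows "summable (\<lambda>m. \<beta> ^ m * (c1 + c2 * real m ^ p))"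
proof (rule summable_comparison_test[OF _ summable_mult[OF summable_poly_geo[OF b0 b1, of p], of "\<bar>c1\<bar> + \<bar>c2\<bar>"]])
  show "\<exists>N. \<forall>n\<ge>N. norm (\<beta> ^ n * (c1 + c2 * real n ^ p)) \<le> (\<bar>c1\<bar> + \<bar>c2\<bar>) * (real (Suc n) ^ p * \<beta> ^ n)"
  proof (intro exI allI impI)
    fix n :: nat
    have p1: "1 \<le> real (Suc n) ^ p" by simp
    have p2: "real n ^ p \<le> real (Suc n) ^ p" by (intro power_mono) auto
    have "\<bar>c1 + c2 * real n ^ p\<bar> \<le> \<bar>c1\<bar> + \<bar>c2\<bar> * real n ^ p"
      by (rule order_trans[OF abs_triangle_ineq]) (simp add: abs_mult)
    also have "\<dots> \<le> \<bar>c1\<bar> * real (Suc n) ^ p + \<bar>c2\<bar> * real (Suc n) ^ p"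
      using p2 mult_left_mono[OF p1, of "\<bar>c1\<bar>"] by (intro add_mono mult_left_mono) auto
    finally have "\<bar>c1 + c2 * real n ^ p\<bar> \<le> (\<bar>c1\<bar> + \<bar>c2\<bar>) * real (Suc n) ^ p" by (simp add: algebra_simps)
    hence "\<beta>^n * \<bar>c1 + c2 * real n ^ p\<bar> \<le> \<beta>^n * ((\<bar>c1\<bar> + \<bar>c2\<bar>) * real (Suc n) ^ p)"
      using b0 by (intro mult_left_mono) auto
    moreover have "norm (\<beta> ^ n * (c1 + c2 * real n ^ p)) = \<beta>^n * \<bar>c1 + c2 * real n ^ p\<bar>"
      by (simp only: real_norm_def abs_mult abs_of_nonneg[OF zero_le_power[OF b0]])
    ultimately show "norm (\<beta> ^ n * (c1 + c2 * real n ^ p)) \<le> (\<bar>c1\<bar> + \<bar>c2\<bar>) * (real (Suc n) ^ p * \<beta> ^ n)"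
      by (simp add: algebra_simps)
  qed
qed

lemma conv_tendsto_zero:
  fixes b U :: "nat \<Rightarrow> real"
  assumes b0: "\<And>m. b m \<ge> 0" and bs: "summable b"
    and U0: "\<And>t. U t \<ge> 0" and U: "U \<longlonglongrightarrow> 0"
  shows "(\<lambda>k. \<Sum>t<k. b (k - Suc t) * U t) \<longlonglongrightarrow> 0"
proof (rule LIMSEQ_I)
  fix \<epsilon> :: real assume e: "\<epsilon> > 0"
  define S where "S = suminf b + 1"
  have S0: "suminf b \<ge> 0" using suminf_nonneg[OF bs] b0 by auto
  hence S: "S > 0" unfolding S_def by simp
  have eS: "\<epsilon> / (2 * S) > 0" using e S by simp
  obtain T where T: "\<forall>t\<ge>T. norm (U t - 0) < \<epsilon> / (2 * S)" using LIMSEQ_D[OF U eS] by blast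
  have bt: "(\<lambda>k. b (k - Suc t)) \<longlonglongrightarrow> 0" for t
    by (rule filterlim_compose[OF summable_LIMSEQ_zero[OF bs] filterlim_minus_const_nat_at_top])
  have lT: "(\<lambda>k. \<Sum>t<T. b (k - Suc t) * U t) \<longlonglongrightarrow> 0"
    by (rule tendsto_null_sum, rule tendsto_mult_left_zero, rule bt)
  obtain K where
    K: "\<forall>k\<ge>K. norm ((\<Sum>t<T. b (k - Suc t) * U t) - 0) < \<epsilon>/2" using LIMSEQ_D[OF lT, of "\<epsilon>/2"] e by auto
  show "\<exists>no. \<forall>k\<ge>no. norm ((\<Sum>t<k. b (k - Suc t) * U t) - 0) < \<epsilon>"
  proof (intro exI[of _ "max K T"] allI impI)
    fix k assume k: "k \<ge> max K T"
    have nn: "0 \<le> b (k - Suc t) * U t" for t using b0 U0 by simp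
    have split: "{..<k} = {..<T} \<union> {T..<k}" using k by auto
    have "(\<Sum>t<k. b (k - Suc t) * U t) = (\<Sum>t<T. b (k - Suc t) * U t) + (\<Sum>t\<in>{T..<k}. b (k - Suc t) * U t)"
      unfolding split by (rule sum.union_disjoint) auto
    also have "(\<Sum>t\<in>{T..<k}. b (k - Suc t) * U t) \<le> (\<Sum>t\<in>{T..<k}. b (k - Suc t) * (\<epsilon> / (2 * S)))"
  proof (rule sum_mono)
      fix t assume "t \<in> {T..<k}"
      hence "U t \<le> \<epsilon> / (2 * S)" using T[rule_format, of t] U0[of t] by simp
      thus "b (k - Suc t) * U t \<le> b (k - Suc t) * (\<epsilon> / (2 * S))" using b0 by (rule mult_left_mono) 
    qed
    also have "\<dots> \<le> (\<Sum>t<k. b (k - Suc t) * (\<epsilon> / (2 * S)))"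
      using b0 e S by (intro sum_mono2) (simp_all add: subset_eq)
    also have "\<dots> = (\<Sum>t<k. b (k - Suc t)) * (\<epsilon> / (2 * S))" by (rule sum_distrib_right[symmetric])
    also have "(\<Sum>t<k. b (k - Suc t)) = (\<Sum>t<k. b t)" by (rule sum.nat_diff_reindex)
    also have "(\<Sum>t<k. b t) \<le> suminf b" using sum_le_suminf[OF bs, of "{..<k}"] b0 by auto
    hence "(\<Sum>t<k. b t) * (\<epsilon> / (2 * S)) \<le> suminf b * (\<epsilon> / (2 * S))" using e S by (intro mult_right_mono) auto
    finally have le: "(\<Sum>t<k. b (k - Suc t) * U t) \<le> (\<Sum>t<T. b (k - Suc t) * U t) + suminf b * (\<epsilon> / (2 * S))"
      by linarith
    have h1: "suminf b * (\<epsilon> / (2 * S)) < \<epsilon> / 2"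
      using S e S0 unfolding S_def by (simp add: field_simps)
    have h2: "(\<Sum>t<T. b (k - Suc t) * U t) < \<epsilon>/2" using K[rule_format, of k] k by simp
    have h3: "0 \<le> (\<Sum>t<k. b (k - Suc t) * U t)" using nn by (intro sum_nonneg) auto
    have "(\<Sum>t<k. b (k - Suc t) * U t) < \<epsilon>" using le h1 h2 by linarith
    thus "norm ((\<Sum>t<k. b (k - Suc t) * U t) - 0) < \<epsilon>" using h3 by simp
  qed
qed

lemma sandwich0:
  fixes f g :: "nat \<Rightarrow> real"
  assumes "\<And>k. \<bar>f k\<bar> \<le> g k" and "g \<longlonglongrightarrow> 0"
  shows "f \<longlonglongrightarrow> 0"
proof (rule tendsto_sandwich[of "\<lambda>k. - g k" _ _ g])
  show "\<forall>\<^sub>F n in sequentially. - g n \<le> f n"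
  proof (rule always_eventually, rule allI)
    fix x show "- g x \<le> f x" using abs_le_D2[OF assms(1)[of x]] by linarith
  qed
  show "\<forall>\<^sub>F n in sequentially. f n \<le> g n"
  proof (rule always_eventually, rule allI)
    fix x show "f x \<le> g x" using abs_le_D1[OF assms(1)[of x]] by linarith
  qed
  show "(\<lambda>k. - g k) \<longlonglongrightarrow> 0" using tendsto_minus[OF assms(2)] by simp
qed (rule assms(2))

lemma pow_mat_Suc_left: assumes A: "A \<in> carrier_mat n n"
  shows "A ^\<^sub>m Suc k = A * A ^\<^sub>m k"
proof (induct k)
  case 0 thus ?case using A by simp
next
  case (Suc k)
  have "A ^\<^sub>m Suc (Suc k) = (A * A ^\<^sub>m k) * A" using Suc by simp
  also have "\<dots> = A * (A ^\<^sub>m k * A)" using A by (intro assoc_mult_mat[of _ n n _ n _ n]) auto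
  finally show ?case by simp
qed

lemma mult_entry: assumes A: "A \<in> carrier_mat nr n" and B: "B \<in> carrier_mat n nc"
  and i: "i < nr" and j: "j < nc"
  shows "(A * B) $$ (i, j) = (\<Sum>l<n. A $$ (i, l) * B $$ (l, j))"
  using A B i j by (simp add: scalar_prod_def atLeast0LessThan)

lemma mult_vec_entry: assumes A: "A \<in> carrier_mat nr n" and v: "v \<in> carrier_vec n"
  and i: "i < nr"
  shows "(A *\<^sub>v v) $ i = (\<Sum>l<n. A $$ (i, l) * v $ l)"
  using A v i by (simp add: scalar_prod_def atLeast0LessThan)

lemma sum_one_mat: assumes "l < n" shows "(\<Sum>c<n. (1\<^sub>m n) $$ (l,c) * f c) = (f l :: 'a :: comm_ring_1)"
proof -
  have "(\<Sum>c<n. (1\<^sub>m n) $$ (l,c) * f c) = (\<Sum>c<n. if l = c then f c else 0)"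
    using assms by (intro sum.cong) auto
  also have "\<dots> = f l" using assms by (simp add: sum.delta)
  finally show ?thesis .
qed

lemma swap1: "(\<Sum>c\<in>C. (a c :: real) * (\<Sum>c'\<in>C'. b c c' * w c')) = (\<Sum>c'\<in>C'. (\<Sum>c\<in>C. a c * b c c') * w c')"
  by (simp add: sum_distrib_left sum_distrib_right mult.assoc) (rule sum.swap)

lemma swap2: "(\<Sum>c\<in>C. (a c :: real) * (\<Sum>t\<in>T. \<Sum>c'\<in>C'. b t c c' * w t c')) = (\<Sum>t\<in>T. \<Sum>c'\<in>C'. (\<Sum>c\<in>C. a c * b t c c') * w t c')"
proof -
  have "(\<Sum>c\<in>C. a c * (\<Sum>t\<in>T. \<Sum>c'\<in>C'. b t c c' * w t c')) = (\<Sum>c\<in>C. \<Sum>t\<in>T. a c * (\<Sum>c'\<in>C'. b t c c' * w t c'))"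
    by (simp add: sum_distrib_left)
  also have "\<dots> = (\<Sum>t\<in>T. \<Sum>c\<in>C. a c * (\<Sum>c'\<in>C'. b t c c' * w t c'))" by (rule sum.swap)
  also have "\<dots> = (\<Sum>t\<in>T. \<Sum>c'\<in>C'. (\<Sum>c\<in>C. a c * b t c c') * w t c')" by (simp only: swap1)
  finally show ?thesis .
qed

lemma closed_form:
  fixes M :: "real mat" and z u :: "nat \<Rightarrow> nat \<Rightarrow> real"
  assumes M: "M \<in> carrier_mat n n"
    and rec: "\<And>k l. l < n \<Longrightarrow> z (Suc k) l = (\<Sum>c<n. M $$ (l,c) * z k c) + u k l"
  shows "l < n \<Longrightarrow> z k l = (\<Sum>c<n. (M ^\<^sub>m k) $$ (l,c) * z 0 c)
            + (\<Sum>t<k. \<Sum>c<n. (M ^\<^sub>m (k - Suc t)) $$ (l,c) * u t c)"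
proof (induct k arbitrary: l)
  case 0
  have h: "M ^\<^sub>m 0 = 1\<^sub>m n" using M by simp
  show ?case by (simp only: h sum_one_mat[OF 0]) simp
next
  case (Suc k l)
  have "z (Suc k) l = (\<Sum>c<n. M $$ (l,c) * ((\<Sum>c'<n. (M ^\<^sub>m k) $$ (c,c') * z 0 c')
            + (\<Sum>t<k. \<Sum>c'<n. (M ^\<^sub>m (k - Suc t)) $$ (c,c') * u t c'))) + u k l"
    using rec[OF Suc(2)] Suc(1) by simp
  also have "\<dots> = (\<Sum>c'<n. (\<Sum>c<n. M $$ (l,c) * (M ^\<^sub>m k) $$ (c,c')) * z 0 c')
     + (\<Sum>t<k. \<Sum>c'<n. (\<Sum>c<n. M $$ (l,c) * (M ^\<^sub>m (k - Suc t)) $$ (c,c')) * u t c') + u k l"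
    by (simp only: distrib_left sum.distrib swap1 swap2)
  also have "(\<Sum>c'<n. (\<Sum>c<n. M $$ (l,c) * (M ^\<^sub>m k) $$ (c,c')) * z 0 c') = (\<Sum>c'<n. (M ^\<^sub>m Suc k) $$ (l,c') * z 0 c')"
    using M Suc(2) by (intro sum.cong refl) (simp add: pow_mat_Suc_left[OF M, of k] mult_entry[OF M pow_carrier_mat[OF M]] del: pow_mat.simps(2) index_mult_mat)
  also have "(\<Sum>t<k. \<Sum>c'<n. (\<Sum>c<n. M $$ (l,c) * (M ^\<^sub>m (k - Suc t)) $$ (c,c')) * u t c')
     = (\<Sum>t<k. \<Sum>c'<n. (M ^\<^sub>m (Suc k - Suc t)) $$ (l,c') * u t c')"
  proof (intro sum.cong refl)
    fix t c' assume t: "t \<in> {..<k}" and c': "c' \<in> {..<n}"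
    have "Suc k - Suc t = Suc (k - Suc t)" using t by auto
    thus "(\<Sum>c<n. M $$ (l,c) * (M ^\<^sub>m (k - Suc t)) $$ (c,c')) * u t c' = (M ^\<^sub>m (Suc k - Suc t)) $$ (l,c') * u t c'"
      using M Suc(2) c' by (simp add: pow_mat_Suc_left[OF M, of "k - Suc t"] mult_entry[OF M pow_carrier_mat[OF M]] del: pow_mat.simps(2) index_mult_mat)
  qed
  also have "u k l = (\<Sum>c'<n. (M ^\<^sub>m (Suc k - Suc k)) $$ (l,c') * u k c')"
  proof -
    have h: "M ^\<^sub>m (Suc k - Suc k) = 1\<^sub>m n" using M by simp
    show ?thesis by (simp only: h sum_one_mat[OF Suc(2)])
  qed
  finally show ?case by simp
qed

lemma eig_bound_R:
  fixes M :: "real mat"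
  assumes M: "M \<in> carrier_mat n n" and n: "n > 0"
    and ev: "\<And>ev. eigenvalue (map_mat complex_of_real M) ev \<Longrightarrow> cmod ev < 1"
  shows "\<exists>R. 0 < R \<and> R < 1 \<and> (\<forall>ev. eigenvalue (map_mat complex_of_real M) ev \<longrightarrow> cmod ev \<le> R)"
proof -
  define Mc where "Mc = map_mat complex_of_real M"
  have Mc: "Mc \<in> carrier_mat n n" using M unfolding Mc_def by auto
  from spectral_radius_mem_max(1)[OF Mc n] obtain e where
    e: "e \<in> spectrum Mc" and eq: "spectral_radius Mc = norm e" by auto
  have sr1: "spectral_radius Mc < 1" using ev[folded Mc_def] e eq unfolding spectrum_def by auto
  have sr0: "spectral_radius Mc \<ge> 0" using eq by simp
  show ?thesis
  proof (intro exI[of _ "(1 + spectral_radius Mc) / 2"] conjI allI impI)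
    fix ev assume "eigenvalue (map_mat complex_of_real M) ev"
    hence "norm ev \<in> norm ` spectrum Mc" unfolding spectrum_def Mc_def by auto
    from spectral_radius_mem_max(2)[OF Mc n this] sr1
    show "cmod ev \<le> (1 + spectral_radius Mc) / 2" by simp
  qed (use sr0 sr1 in auto)
qed

lemma schur_pow_bound:
  fixes M :: "real mat"
  assumes M: "M \<in> carrier_mat n n" and S: "schur_stable M"
  shows "\<exists>bd. summable bd \<and> (\<forall>m. bd m \<ge> 0) \<and>
           (\<forall>m i j. i < n \<longrightarrow> j < n \<longrightarrow> \<bar>(M ^\<^sub>m m) $$ (i,j)\<bar> \<le> bd m)"
proof (cases "n = 0")
  case True thus ?thesis by (intro exI[of _ "\<lambda>_. 0"]) auto
next
  case False
  hence n: "n > 0" by simp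
  from S have ev: "\<And>ev. eigenvalue (map_mat complex_of_real M) ev \<Longrightarrow> cmod ev < 1"
    unfolding schur_stable_def by auto
  from eig_bound_R[OF M n ev] obtain R where R: "0 < R" "R < 1"
    and evR: "\<And>ev. eigenvalue (map_mat complex_of_real M) ev \<Longrightarrow> cmod ev \<le> R" by blast
  from real_pow_bound[OF M R(1) evR] obtain c1 c2 where
    b: "\<forall>k i j. i < n \<longrightarrow> j < n \<longrightarrow> \<bar>(M ^\<^sub>m k) $$ (i, j)\<bar> \<le> R ^ k * (c1 + c2 * real k ^ (n - 1))" by blast
  show ?thesis
  proof (intro exI[of _ "\<lambda>m. R ^ m * (\<bar>c1\<bar> + \<bar>c2\<bar> * real m ^ (n - 1))"] conjI allI impI)
    show "summable (\<lambda>m. R ^ m * (\<bar>c1\<bar> + \<bar>c2\<bar> * real m ^ (n - 1)))"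
      by (rule summable_poly_geo') (use R in auto)
    fix m show "0 \<le> R ^ m * (\<bar>c1\<bar> + \<bar>c2\<bar> * real m ^ (n - 1))" using R by simp
    fix i j assume i: "i < n" and j: "j < n"
    have "c1 + c2 * real m ^ (n - 1) \<le> \<bar>c1\<bar> + \<bar>c2\<bar> * real m ^ (n - 1)"
      by (intro add_mono mult_right_mono) auto
    hence "R ^ m * (c1 + c2 * real m ^ (n - 1)) \<le> R ^ m * (\<bar>c1\<bar> + \<bar>c2\<bar> * real m ^ (n - 1))"
      using R by (intro mult_left_mono) auto
    thus "\<bar>(M ^\<^sub>m m) $$ (i, j)\<bar> \<le> R ^ m * (\<bar>c1\<bar> + \<bar>c2\<bar> * real m ^ (n - 1))"
      using b i j by (meson order_trans)
  qed
qed

lemma schur_input_to_zero: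
  fixes M :: "real mat" and z u :: "nat \<Rightarrow> nat \<Rightarrow> real"
  assumes M: "M \<in> carrier_mat n n" and S: "schur_stable M"
    and rec: "\<And>k l. l < n \<Longrightarrow> z (Suc k) l = (\<Sum>c<n. M $$ (l,c) * z k c) + u k l"
    and u: "\<And>l. l < n \<Longrightarrow> (\<lambda>k. u k l) \<longlonglongrightarrow> 0"
    and l: "l < n"
  shows "(\<lambda>k. z k l) \<longlonglongrightarrow> 0"
proof -
  from schur_pow_bound[OF M S] obtain bd where bs: "summable bd" and b0: "\<And>m. bd m \<ge> 0"
    and bd: "\<And>m i j. i < n \<Longrightarrow> j < n \<Longrightarrow> \<bar>(M ^\<^sub>m m) $$ (i,j)\<bar> \<le> bd m" by blast
  define Z0 where "Z0 = (\<Sum>c<n. \<bar>z 0 c\<bar>)"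
  define U where "U t = (\<Sum>c<n. \<bar>u t c\<bar>)" for t
  have abs_le: "\<bar>\<Sum>c<n. (M ^\<^sub>m m) $$ (l,c) * w c\<bar> \<le> bd m * (\<Sum>c<n. \<bar>w c\<bar>)" for m w
  proof -
    have "\<bar>\<Sum>c<n. (M ^\<^sub>m m) $$ (l,c) * w c\<bar> \<le> (\<Sum>c<n. \<bar>(M ^\<^sub>m m) $$ (l,c) * w c\<bar>)" by (rule sum_abs)
    also have "\<dots> \<le> (\<Sum>c<n. bd m * \<bar>w c\<bar>)"
      by (intro sum_mono) (use bd l in \<open>auto simp: abs_mult intro: mult_right_mono\<close>)
    finally show ?thesis by (simp add: sum_distrib_left)
  qed
  have main: "\<bar>z k l\<bar> \<le> bd k * Z0 + (\<Sum>t<k. bd (k - Suc t) * U t)" for k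
  proof -
    have cf: "z k l = (\<Sum>c<n. (M ^\<^sub>m k) $$ (l,c) * z 0 c) + (\<Sum>t<k. \<Sum>c<n. (M ^\<^sub>m (k - Suc t)) $$ (l,c) * u t c)"
      by (rule closed_form[where z=z and u=u and k=k, OF M rec l])
    have "\<bar>z k l\<bar> \<le> \<bar>\<Sum>c<n. (M ^\<^sub>m k) $$ (l,c) * z 0 c\<bar> + \<bar>\<Sum>t<k. \<Sum>c<n. (M ^\<^sub>m (k - Suc t)) $$ (l,c) * u t c\<bar>"
      unfolding cf by (rule abs_triangle_ineq)
    also have "\<dots> \<le> \<bar>\<Sum>c<n. (M ^\<^sub>m k) $$ (l,c) * z 0 c\<bar> + (\<Sum>t<k. \<bar>\<Sum>c<n. (M ^\<^sub>m (k - Suc t)) $$ (l,c) * u t c\<bar>)"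
      by (rule add_left_mono[OF sum_abs])
    also have "\<dots> \<le> bd k * Z0 + (\<Sum>t<k. bd (k - Suc t) * U t)"
      unfolding Z0_def U_def by (intro add_mono abs_le sum_mono)
    finally show ?thesis .
  qed
  show ?thesis
  proof (rule sandwich0[OF main])
    have "(\<lambda>k. bd k * Z0) \<longlonglongrightarrow> 0" by (rule tendsto_mult_left_zero[OF summable_LIMSEQ_zero[OF bs]])
    moreover have "(\<lambda>k. \<Sum>t<k. bd (k - Suc t) * U t) \<longlonglongrightarrow> 0"
    proof (rule conv_tendsto_zero[OF b0 bs])
      show "\<And>t. 0 \<le> U t" unfolding U_def by (intro sum_nonneg) auto
      show "U \<longlonglongrightarrow> 0" unfolding U_def
        using tendsto_sum[of "{..<n}" "\<lambda>c t. \<bar>u t c\<bar>" "\<lambda>_. 0"] tendsto_rabs_zero[OF u] by auto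
    qed
    ultimately show "(\<lambda>k. bd k * Z0 + (\<Sum>t<k. bd (k - Suc t) * U t)) \<longlonglongrightarrow> 0"
      using tendsto_add[of _ 0 _ _ 0] by fastforce
  qed
qed

definition Dop :: "nat \<Rightarrow> (nat \<Rightarrow> nat \<Rightarrow> real) \<Rightarrow> (nat \<Rightarrow> real) \<Rightarrow> nat \<Rightarrow> real" where
  "Dop N d w i = (\<Sum>j<N. d i j * w j)"

lemma Dop_cong: "(\<And>j. j < N \<Longrightarrow> f j = g j) \<Longrightarrow> Dop N d f i = Dop N d g i"
  unfolding Dop_def by (intro sum.cong) auto

lemma Dop_pow_Suc: "(Dop N d ^^ Suc k) w = Dop N d ((Dop N d ^^ k) w)" by simp

lemma Dop_sum: "finite S \<Longrightarrow> Dop N d (\<lambda>j. \<Sum>x\<in>S. f x j) i = (\<Sum>x\<in>S. Dop N d (f x) i)"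
  unfolding Dop_def by (simp add: sum_distrib_left) (rule sum.swap)

lemma Dop_scale: "Dop N d (\<lambda>j. a * f j) i = a * Dop N d f i"
  unfolding Dop_def by (simp add: sum_distrib_left algebra_simps)

lemma Dop_add: "Dop N d (\<lambda>j. f j + g j) i = Dop N d f i + Dop N d g i"
  unfolding Dop_def by (simp add: sum.distrib algebra_simps)

locale stoch =
  fixes N :: nat and d :: "nat \<Rightarrow> nat \<Rightarrow> real"
  assumes dnn: "\<And>i j. i < N \<Longrightarrow> j < N \<Longrightarrow> 0 \<le> d i j"
    and drow: "\<And>i. i < N \<Longrightarrow> (\<Sum>j<N. d i j) = 1"
begin

lemma Dop_affine: "i < N \<Longrightarrow> (Dop N d ^^ k) (\<lambda>j. c + s * w j) i = c + s * (Dop N d ^^ k) w i"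
proof (induct k arbitrary: i)
  case 0 thus ?case by simp
next
  case (Suc k)
  have "(Dop N d ^^ Suc k) (\<lambda>j. c + s * w j) i = Dop N d (\<lambda>j. c + s * (Dop N d ^^ k) w j) i"
    unfolding Dop_pow_Suc by (rule Dop_cong) (rule Suc(1))
  also have "\<dots> = (\<Sum>j<N. d i j) * c + s * Dop N d ((Dop N d ^^ k) w) i"
    unfolding Dop_def by (simp add: algebra_simps sum.distrib sum_distrib_left sum_distrib_right)
  also have "\<dots> = c + s * (Dop N d ^^ Suc k) w i" using drow[OF Suc(2)] by simp
  finally show ?case .
qed

lemma Dop_nonneg1: "(\<And>j. j < N \<Longrightarrow> 0 \<le> w j) \<Longrightarrow> i < N \<Longrightarrow> 0 \<le> Dop N d w i"
  unfolding Dop_def using dnn by (intro sum_nonneg mult_nonneg_nonneg) auto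

lemma Dop_nonneg: "(\<And>j. j < N \<Longrightarrow> 0 \<le> w j) \<Longrightarrow> i < N \<Longrightarrow> 0 \<le> (Dop N d ^^ k) w i"
proof (induct k arbitrary: i)
  case 0 thus ?case by simp
next
  case (Suc k)
  show ?case unfolding Dop_pow_Suc by (rule Dop_nonneg1) (use Suc in auto)
qed

lemma Dop_ge_term: "(\<And>j. j < N \<Longrightarrow> 0 \<le> w j) \<Longrightarrow> i < N \<Longrightarrow> j < N \<Longrightarrow> d i j * w j \<le> Dop N d w i"
  unfolding Dop_def using dnn by (intro member_le_sum) auto

definition Rng :: "(nat \<Rightarrow> real) \<Rightarrow> real \<Rightarrow> real \<Rightarrow> bool" where
  "Rng w a b \<longleftrightarrow> (\<forall>j<N. a \<le> w j \<and> w j \<le> b)"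

lemma Rng_pow: assumes "Rng w a b" shows "Rng ((Dop N d ^^ k) w) a b"
  unfolding Rng_def
proof (intro allI impI conjI)
  fix i assume i: "i < N"
  have "0 \<le> (Dop N d ^^ k) (\<lambda>j. (-a) + 1 * w j) i"
    by (rule Dop_nonneg) (use assms i in \<open>auto simp: Rng_def\<close>)
  thus "a \<le> (Dop N d ^^ k) w i" unfolding Dop_affine[OF i] by simp
  have "0 \<le> (Dop N d ^^ k) (\<lambda>j. b + (-1) * w j) i"
    by (rule Dop_nonneg) (use assms i in \<open>auto simp: Rng_def\<close>)
  thus "(Dop N d ^^ k) w i \<le> b" unfolding Dop_affine[OF i] by simp
qed

lemma tree_lower:
  assumes g0: "0 \<le> \<gamma>" and diag: "\<And>i. i < N \<Longrightarrow> \<gamma> \<le> d i i"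
    and pr: "\<And>i. i < N \<Longrightarrow> i \<noteq> r \<Longrightarrow> par i < N \<and> \<gamma> \<le> d i (par i)"
    and r: "r < N" and w: "\<And>j. j < N \<Longrightarrow> 0 \<le> w j"
  shows "i < N \<Longrightarrow> (\<exists>m\<le>k. (par ^^ m) i = r) \<Longrightarrow> \<gamma> ^ k * w r \<le> (Dop N d ^^ k) w i"
proof (induct k arbitrary: i)
  case 0 thus ?case by auto
next
  case (Suc k i)
  from Suc(3) obtain m where m: "m \<le> Suc k" "(par ^^ m) i = r" by blast
  have X0: "\<And>j. j < N \<Longrightarrow> 0 \<le> (Dop N d ^^ k) w j" using Dop_nonneg w by blast
  have wr: "0 \<le> w r" using w r by simp
  show ?case
  proof (cases "i = r")
    case True
    have "\<exists>m\<le>k. (par ^^ m) r = r" by (intro exI[of _ 0]) auto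
    hence IH: "\<gamma> ^ k * w r \<le> (Dop N d ^^ k) w r" using Suc(1)[of r] r by auto
    have "\<gamma> ^ Suc k * w r = \<gamma> * (\<gamma> ^ k * w r)" by simp
    also have "\<dots> \<le> \<gamma> * (Dop N d ^^ k) w r" using IH g0 by (rule mult_left_mono)
    also have "\<dots> \<le> d r r * (Dop N d ^^ k) w r" using diag[OF r] X0[OF r] by (rule mult_right_mono)
    also have "\<dots> \<le> (Dop N d ^^ Suc k) w r" unfolding Dop_pow_Suc by (rule Dop_ge_term[OF X0 r r])
    finally show ?thesis using True by simp
  next
    case False
    with m obtain m' where m': "m = Suc m'" by (cases m) auto
    have p: "par i < N" "\<gamma> \<le> d i (par i)" using pr[OF Suc(2) False] by auto
    have "(par ^^ m') (par i) = r" using m(2) unfolding m' funpow_Suc_right by simp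
    hence IH: "\<gamma> ^ k * w r \<le> (Dop N d ^^ k) w (par i)" using Suc(1)[of "par i"] p m(1) m' by auto
    have "\<gamma> ^ Suc k * w r = \<gamma> * (\<gamma> ^ k * w r)" by simp
    also have "\<dots> \<le> \<gamma> * (Dop N d ^^ k) w (par i)" using IH g0 by (rule mult_left_mono)
    also have "\<dots> \<le> d i (par i) * (Dop N d ^^ k) w (par i)" using p(2) X0[OF p(1)] by (rule mult_right_mono)
    also have "\<dots> \<le> (Dop N d ^^ Suc k) w i" unfolding Dop_pow_Suc by (rule Dop_ge_term[OF X0 Suc(2) p(1)])
    finally show ?thesis .
  qed
qed

lemma contract:
  assumes g0: "0 \<le> \<gamma>" and diag: "\<And>i. i < N \<Longrightarrow> \<gamma> \<le> d i i"
    and pr: "\<And>i. i < N \<Longrightarrow> i \<noteq> r \<Longrightarrow> par i < N \<and> \<gamma> \<le> d i (par i)"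
    and r: "r < N" and L: "\<And>i. i < N \<Longrightarrow> \<exists>m\<le>L. (par ^^ m) i = r"
    and R: "Rng w a b"
  shows "Rng ((Dop N d ^^ L) w) (a + \<gamma>^L * (w r - a)) (b - \<gamma>^L * (b - w r))"
  unfolding Rng_def
proof (intro allI impI conjI)
  fix i assume i: "i < N"
  have nn1: "\<And>j. j < N \<Longrightarrow> 0 \<le> -a + 1 * w j" using R by (auto simp: Rng_def)
  have "\<gamma> ^ L * (-a + 1 * w r) \<le> (Dop N d ^^ L) (\<lambda>j. -a + 1 * w j) i"
    by (rule tree_lower[OF g0 diag pr r nn1 i L[OF i]])
  thus "a + \<gamma> ^ L * (w r - a) \<le> (Dop N d ^^ L) w i" unfolding Dop_affine[OF i] by simp
  have nn2: "\<And>j. j < N \<Longrightarrow> 0 \<le> b + (-1) * w j" using R by (auto simp: Rng_def)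
  have "\<gamma> ^ L * (b + (-1) * w r) \<le> (Dop N d ^^ L) (\<lambda>j. b + (-1) * w j) i"
    by (rule tree_lower[OF g0 diag pr r nn2 i L[OF i]])
  thus "(Dop N d ^^ L) w i \<le> b - \<gamma> ^ L * (b - w r)" unfolding Dop_affine[OF i] by simp
qed

lemma contract_iter:
  assumes g0: "0 \<le> \<gamma>" and diag: "\<And>i. i < N \<Longrightarrow> \<gamma> \<le> d i i"
    and pr: "\<And>i. i < N \<Longrightarrow> i \<noteq> r \<Longrightarrow> par i < N \<and> \<gamma> \<le> d i (par i)"
    and r: "r < N" and L: "\<And>i. i < N \<Longrightarrow> \<exists>m\<le>L. (par ^^ m) i = r"
    and g1: "\<gamma> ^ L \<le> 1"
  shows "Rng w a b \<Longrightarrow> \<exists>a' b'. Rng ((Dop N d ^^ (q * L)) w) a' b' \<and> b' - a' \<le> (1 - \<gamma>^L) ^ q * (b - a)"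
proof (induct q)
  case 0 thus ?case by auto
next
  case (Suc q)
  then obtain a' b' where R: "Rng ((Dop N d ^^ (q * L)) w) a' b'" and wd: "b' - a' \<le> (1 - \<gamma>^L) ^ q * (b - a)" by blast
  let ?w = "(Dop N d ^^ (q * L)) w"
  have eq: "(Dop N d ^^ (Suc q * L)) w = (Dop N d ^^ L) ?w" by (simp add: funpow_add)
  have "(b' - \<gamma>^L * (b' - ?w r)) - (a' + \<gamma>^L * (?w r - a')) = (1 - \<gamma>^L) * (b' - a')" by (simp add: algebra_simps)
  also have "\<dots> \<le> (1 - \<gamma>^L) * ((1 - \<gamma>^L) ^ q * (b - a))" using wd g1 by (intro mult_left_mono) auto
  finally show ?case using contract[OF g0 diag pr r L R] unfolding eq by (intro exI conjI) auto
qed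

lemma osc_bound:
  assumes g0: "0 \<le> \<gamma>" and diag: "\<And>i. i < N \<Longrightarrow> \<gamma> \<le> d i i"
    and pr: "\<And>i. i < N \<Longrightarrow> i \<noteq> r \<Longrightarrow> par i < N \<and> \<gamma> \<le> d i (par i)"
    and r: "r < N" and L: "\<And>i. i < N \<Longrightarrow> \<exists>m\<le>L. (par ^^ m) i = r"
    and g1: "\<gamma> ^ L \<le> 1" and i: "i < N" and i': "i' < N"
  shows "\<bar>(Dop N d ^^ m) w i - (Dop N d ^^ m) w i'\<bar> \<le> 2 * (1 - \<gamma>^L) ^ (m div L) * (\<Sum>j<N. \<bar>w j\<bar>)"
proof -
  define S where "S = (\<Sum>j<N. \<bar>w j\<bar>)"
  have "Rng w (-S) S" unfolding Rng_def S_def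
  proof (intro allI impI)
    fix j assume j: "j < N"
    have "\<bar>w j\<bar> \<le> (\<Sum>j<N. \<bar>w j\<bar>)" using j by (intro member_le_sum) auto
    thus "- (\<Sum>j<N. \<bar>w j\<bar>) \<le> w j \<and> w j \<le> (\<Sum>j<N. \<bar>w j\<bar>)" by linarith
  qed
  from contract_iter[OF g0 diag pr r L g1 this, of "m div L"] obtain a' b' where
    R: "Rng ((Dop N d ^^ (m div L * L)) w) a' b'" and wd: "b' - a' \<le> (1 - \<gamma>^L) ^ (m div L) * (S - - S)" by blast
  have eq: "(Dop N d ^^ m) w = (Dop N d ^^ (m mod L)) ((Dop N d ^^ (m div L * L)) w)"
  proof -
    have "(Dop N d ^^ m) w = (Dop N d ^^ (m mod L + m div L * L)) w" by simp
    also have "\<dots> = (Dop N d ^^ (m mod L)) ((Dop N d ^^ (m div L * L)) w)" by (simp only: funpow_add o_apply)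
    finally show ?thesis .
  qed
  from Rng_pow[OF R, of "m mod L"] i i' have "a' \<le> (Dop N d ^^ m) w i" "(Dop N d ^^ m) w i \<le> b'"
     "a' \<le> (Dop N d ^^ m) w i'" "(Dop N d ^^ m) w i' \<le> b'" unfolding eq Rng_def by auto
  hence "\<bar>(Dop N d ^^ m) w i - (Dop N d ^^ m) w i'\<bar> \<le> b' - a'" by linarith
  also have "\<dots> \<le> (1 - \<gamma>^L) ^ (m div L) * (S - - S)" by (rule wd)
  finally show ?thesis unfolding S_def by (simp add: algebra_simps)
qed

end

lemma net_closed_form:
  fixes A :: "real mat" and \<Phi> U :: "nat \<Rightarrow> nat \<Rightarrow> nat \<Rightarrow> real"
  assumes A: "A \<in> carrier_mat n n"
    and rec: "\<And>k i l. i < N \<Longrightarrow> l < n \<Longrightarrow>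
       \<Phi> (Suc k) i l = (\<Sum>c<n. A $$ (l,c) * Dop N d (\<lambda>j. \<Phi> k j c) i) + U k i l"
  shows "i < N \<Longrightarrow> l < n \<Longrightarrow> \<Phi> k i l = (\<Sum>c<n. (A ^\<^sub>m k) $$ (l,c) * (Dop N d ^^ k) (\<lambda>j. \<Phi> 0 j c) i)
     + (\<Sum>t<k. \<Sum>c<n. (A ^\<^sub>m (k - Suc t)) $$ (l,c) * (Dop N d ^^ (k - Suc t)) (\<lambda>j. U t j c) i)"
proof (induct k arbitrary: i l)
  case 0
  have h: "A ^\<^sub>m 0 = 1\<^sub>m n" using A by simp
  show ?case by (simp only: h funpow_0 sum_one_mat[OF 0(2)]) simp
next
  case (Suc k i l)
  let ?X = "\<lambda>c j. \<Phi> 0 j c" and ?Y = "\<lambda>t c j. U t j c"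
  have D: "Dop N d (\<lambda>j. \<Phi> k j c) i = (\<Sum>c'<n. (A ^\<^sub>m k) $$ (c,c') * (Dop N d ^^ Suc k) (?X c') i)
     + (\<Sum>t<k. \<Sum>c'<n. (A ^\<^sub>m (k - Suc t)) $$ (c,c') * (Dop N d ^^ (Suc k - Suc t)) (?Y t c') i)"
    if c: "c < n" for c
  proof -
    have "Dop N d (\<lambda>j. \<Phi> k j c) i = Dop N d (\<lambda>j. (\<Sum>c'<n. (A ^\<^sub>m k) $$ (c,c') * (Dop N d ^^ k) (?X c') j)
     + (\<Sum>t<k. \<Sum>c'<n. (A ^\<^sub>m (k - Suc t)) $$ (c,c') * (Dop N d ^^ (k - Suc t)) (?Y t c') j)) i"
      by (rule Dop_cong) (rule Suc(1)[OF _ c])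
    also have "\<dots> = (\<Sum>c'<n. (A ^\<^sub>m k) $$ (c,c') * Dop N d ((Dop N d ^^ k) (?X c')) i)
     + (\<Sum>t<k. \<Sum>c'<n. (A ^\<^sub>m (k - Suc t)) $$ (c,c') * Dop N d ((Dop N d ^^ (k - Suc t)) (?Y t c')) i)"
      by (simp only: Dop_add Dop_sum[OF finite_lessThan] Dop_scale)
    also have "(\<Sum>t<k. \<Sum>c'<n. (A ^\<^sub>m (k - Suc t)) $$ (c,c') * Dop N d ((Dop N d ^^ (k - Suc t)) (?Y t c')) i)
      = (\<Sum>t<k. \<Sum>c'<n. (A ^\<^sub>m (k - Suc t)) $$ (c,c') * (Dop N d ^^ (Suc k - Suc t)) (?Y t c') i)"
    proof (intro sum.cong refl)
      fix t c' assume "t \<in> {..<k}"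
      hence "Suc k - Suc t = Suc (k - Suc t)" by auto
      thus "(A ^\<^sub>m (k - Suc t)) $$ (c,c') * Dop N d ((Dop N d ^^ (k - Suc t)) (?Y t c')) i =
            (A ^\<^sub>m (k - Suc t)) $$ (c,c') * (Dop N d ^^ (Suc k - Suc t)) (?Y t c') i" by simp
    qed
    finally show ?thesis by simp
  qed
  have "\<Phi> (Suc k) i l = (\<Sum>c<n. A $$ (l,c) * ((\<Sum>c'<n. (A ^\<^sub>m k) $$ (c,c') * (Dop N d ^^ Suc k) (?X c') i)
     + (\<Sum>t<k. \<Sum>c'<n. (A ^\<^sub>m (k - Suc t)) $$ (c,c') * (Dop N d ^^ (Suc k - Suc t)) (?Y t c') i))) + U k i l"
    using rec[OF Suc(2) Suc(3)] D by simp
  also have "\<dots> = (\<Sum>c'<n. (\<Sum>c<n. A $$ (l,c) * (A ^\<^sub>m k) $$ (c,c')) * (Dop N d ^^ Suc k) (?X c') i)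
     + (\<Sum>t<k. \<Sum>c'<n. (\<Sum>c<n. A $$ (l,c) * (A ^\<^sub>m (k - Suc t)) $$ (c,c')) * (Dop N d ^^ (Suc k - Suc t)) (?Y t c') i) + U k i l"
    by (simp only: distrib_left sum.distrib swap1 swap2)
  also have "(\<Sum>c'<n. (\<Sum>c<n. A $$ (l,c) * (A ^\<^sub>m k) $$ (c,c')) * (Dop N d ^^ Suc k) (?X c') i)
     = (\<Sum>c'<n. (A ^\<^sub>m Suc k) $$ (l,c') * (Dop N d ^^ Suc k) (?X c') i)"
    using A Suc(3) by (intro sum.cong refl) (simp add: pow_mat_Suc_left[OF A, of k] mult_entry[OF A pow_carrier_mat[OF A]] del: pow_mat.simps(2) index_mult_mat funpow.simps)
  also have "(\<Sum>t<k. \<Sum>c'<n. (\<Sum>c<n. A $$ (l,c) * (A ^\<^sub>m (k - Suc t)) $$ (c,c')) * (Dop N d ^^ (Suc k - Suc t)) (?Y t c') i)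
     = (\<Sum>t<k. \<Sum>c'<n. (A ^\<^sub>m (Suc k - Suc t)) $$ (l,c') * (Dop N d ^^ (Suc k - Suc t)) (?Y t c') i)"
  proof (intro sum.cong refl)
    fix t c' assume t: "t \<in> {..<k}" and c': "c' \<in> {..<n}"
    have e: "Suc k - Suc t = Suc (k - Suc t)" using t by auto
    have "(\<Sum>c<n. A $$ (l,c) * (A ^\<^sub>m (k - Suc t)) $$ (c,c')) = (A ^\<^sub>m (Suc k - Suc t)) $$ (l,c')"
      unfolding e using A Suc(3) c' by (simp add: pow_mat_Suc_left[OF A, of "k - Suc t"] mult_entry[OF A pow_carrier_mat[OF A]] del: pow_mat.simps(2) index_mult_mat)
    thus "(\<Sum>c<n. A $$ (l,c) * (A ^\<^sub>m (k - Suc t)) $$ (c,c')) * (Dop N d ^^ (Suc k - Suc t)) (?Y t c') i =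
          (A ^\<^sub>m (Suc k - Suc t)) $$ (l,c') * (Dop N d ^^ (Suc k - Suc t)) (?Y t c') i" by simp
  qed
  also have "U k i l = (\<Sum>c'<n. (A ^\<^sub>m (Suc k - Suc k)) $$ (l,c') * (Dop N d ^^ (Suc k - Suc k)) (?Y k c') i)"
  proof -
    have h: "A ^\<^sub>m 0 = 1\<^sub>m n" using A by simp
    show ?thesis by (simp only: diff_self_eq_0 h funpow_0 sum_one_mat[OF Suc(3)])
  qed
  finally show ?case by simp
qed

lemma summable_div_geo:
  fixes \<rho> :: real
  assumes r0: "0 < \<rho>" and r1: "\<rho> < 1" and L: "L > 0"
  shows "summable (\<lambda>m. (\<bar>c1\<bar> + \<bar>c2\<bar> * real m ^ p) * (2 * \<rho> ^ (m div L)))"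
proof -
  define \<beta> where "\<beta> = root L \<rho>"
  have b0: "0 < \<beta>" using r0 L unfolding \<beta>_def by simp
  have b1: "\<beta> < 1" using r1 r0 L unfolding \<beta>_def by (simp add: real_root_lt_1_iff)
  have bL: "\<beta> ^ L = \<rho>" using r0 L unfolding \<beta>_def by (simp add: real_root_pow_pos2)
  have le: "\<rho> ^ (m div L) \<le> \<beta> ^ m / \<beta> ^ L" for m
  proof -
    have "\<beta> ^ m = \<beta> ^ (L * (m div L)) * \<beta> ^ (m mod L)"
      by (simp add: power_add[symmetric])
    also have "\<dots> \<ge> \<beta> ^ (L * (m div L)) * \<beta> ^ L"
      using b0 b1 L by (intro mult_left_mono power_decreasing) (auto intro: less_imp_le)
    finally have "\<beta> ^ (L * (m div L)) * \<beta> ^ L \<le> \<beta> ^ m" .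
    moreover have "\<beta> ^ (L * (m div L)) = \<rho> ^ (m div L)" by (simp add: power_mult bL)
    ultimately show ?thesis using b0 by (simp add: field_simps)
  qed
  have s: "summable (\<lambda>m. (2 / \<beta> ^ L) * (\<beta> ^ m * (\<bar>c1\<bar> + \<bar>c2\<bar> * real m ^ p)))"
    by (rule summable_mult, rule summable_poly_geo') (use b0 b1 in auto)
  show ?thesis
  proof (rule summable_comparison_test[OF _ s], intro exI allI impI)
    fix m :: nat
    have P0: "0 \<le> \<bar>c1\<bar> + \<bar>c2\<bar> * real m ^ p" by simp
    have "norm ((\<bar>c1\<bar> + \<bar>c2\<bar> * real m ^ p) * (2 * \<rho> ^ (m div L))) = (\<bar>c1\<bar> + \<bar>c2\<bar> * real m ^ p) * (2 * \<rho> ^ (m div L))"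
      using r0 by simp
    also have "\<dots> \<le> (\<bar>c1\<bar> + \<bar>c2\<bar> * real m ^ p) * (2 * (\<beta> ^ m / \<beta> ^ L))"
      using le[of m] P0 by (intro mult_left_mono) auto
    also have "\<dots> = (2 / \<beta> ^ L) * (\<beta> ^ m * (\<bar>c1\<bar> + \<bar>c2\<bar> * real m ^ p))" by (simp add: field_simps)
    finally show "norm ((\<bar>c1\<bar> + \<bar>c2\<bar> * real m ^ p) * (2 * \<rho> ^ (m div L))) \<le> (2 / \<beta> ^ L) * (\<beta> ^ m * (\<bar>c1\<bar> + \<bar>c2\<bar> * real m ^ p))" .
  qed
qed

context stoch begin

lemma net_converge:
  fixes A :: "real mat" and \<Phi> U :: "nat \<Rightarrow> nat \<Rightarrow> nat \<Rightarrow> real"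
  assumes g0: "0 < \<gamma>" and diag: "\<And>i. i < N \<Longrightarrow> \<gamma> \<le> d i i"
    and pr: "\<And>i. i < N \<Longrightarrow> i \<noteq> r \<Longrightarrow> par i < N \<and> \<gamma> \<le> d i (par i)"
    and r: "r < N" and L0: "L > 0" and L: "\<And>i. i < N \<Longrightarrow> \<exists>m\<le>L. (par ^^ m) i = r"
    and g1: "\<gamma> ^ L < 1"
    and A: "A \<in> carrier_mat n n"
    and Aev: "\<And>ev. eigenvalue (map_mat complex_of_real A) ev \<Longrightarrow> cmod ev \<le> 1"
    and rec: "\<And>k i l. i < N \<Longrightarrow> l < n \<Longrightarrow>
       \<Phi> (Suc k) i l = (\<Sum>c<n. A $$ (l,c) * Dop N d (\<lambda>j. \<Phi> k j c) i) + U k i l"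
    and U: "\<And>j c. j < N \<Longrightarrow> c < n \<Longrightarrow> (\<lambda>k. U k j c) \<longlonglongrightarrow> 0"
    and i: "i < N" and i': "i' < N" and l: "l < n"
  shows "(\<lambda>k. \<Phi> k i l - \<Phi> k i' l) \<longlonglongrightarrow> 0"
proof -
  define \<rho> where "\<rho> = 1 - \<gamma> ^ L"
  have r0: "0 < \<rho>" "\<rho> < 1" using g1 g0 unfolding \<rho>_def by auto
  from real_pow_bound[OF A _ Aev] obtain c1 c2 where
    cb: "\<forall>k i j. i < n \<longrightarrow> j < n \<longrightarrow> \<bar>(A ^\<^sub>m k) $$ (i, j)\<bar> \<le> 1 ^ k * (c1 + c2 * real k ^ (n - 1))" by auto
  define bd where "bd m = (\<bar>c1\<bar> + \<bar>c2\<bar> * real m ^ (n - 1)) * (2 * \<rho> ^ (m div L))" for m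
  have bs: "summable bd" unfolding bd_def by (rule summable_div_geo[OF r0 L0])
  have b0: "\<And>m. bd m \<ge> 0" unfolding bd_def using r0 by simp
  have Ab: "\<bar>(A ^\<^sub>m m) $$ (l, c)\<bar> \<le> \<bar>c1\<bar> + \<bar>c2\<bar> * real m ^ (n - 1)" if c: "c < n" for m c
  proof -
    have "c1 + c2 * real m ^ (n - 1) \<le> \<bar>c1\<bar> + \<bar>c2\<bar> * real m ^ (n - 1)"
      by (intro add_mono mult_right_mono) auto
    moreover have "\<bar>(A ^\<^sub>m m) $$ (l, c)\<bar> \<le> 1 ^ m * (c1 + c2 * real m ^ (n - 1))" using cb l c by blast
    ultimately show ?thesis by simp
  qed
  have g0': "0 \<le> \<gamma>" using g0 by simp
  have g1': "\<gamma> ^ L \<le> 1" using g1 by simp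
  have termb: "\<bar>\<Sum>c<n. (A ^\<^sub>m m) $$ (l,c) * ((Dop N d ^^ m) (w c) i - (Dop N d ^^ m) (w c) i')\<bar>
     \<le> bd m * (\<Sum>c<n. \<Sum>j<N. \<bar>w c j\<bar>)" for m w
  proof -
    have "\<bar>\<Sum>c<n. (A ^\<^sub>m m) $$ (l,c) * ((Dop N d ^^ m) (w c) i - (Dop N d ^^ m) (w c) i')\<bar>
       \<le> (\<Sum>c<n. \<bar>(A ^\<^sub>m m) $$ (l,c) * ((Dop N d ^^ m) (w c) i - (Dop N d ^^ m) (w c) i')\<bar>)" by (rule sum_abs)
    also have "\<dots> \<le> (\<Sum>c<n. bd m * (\<Sum>j<N. \<bar>w c j\<bar>))"
    proof (rule sum_mono)
      fix c assume "c \<in> {..<n}"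
      hence c: "c < n" by simp
      have o: "\<bar>(Dop N d ^^ m) (w c) i - (Dop N d ^^ m) (w c) i'\<bar> \<le> 2 * \<rho> ^ (m div L) * (\<Sum>j<N. \<bar>w c j\<bar>)"
        unfolding \<rho>_def by (rule osc_bound[OF g0' diag pr r L g1' i i'])
      have "\<bar>(A ^\<^sub>m m) $$ (l,c) * ((Dop N d ^^ m) (w c) i - (Dop N d ^^ m) (w c) i')\<bar>
         = \<bar>(A ^\<^sub>m m) $$ (l,c)\<bar> * \<bar>(Dop N d ^^ m) (w c) i - (Dop N d ^^ m) (w c) i'\<bar>" by (simp add: abs_mult)
      also have "\<dots> \<le> (\<bar>c1\<bar> + \<bar>c2\<bar> * real m ^ (n - 1)) * (2 * \<rho> ^ (m div L) * (\<Sum>j<N. \<bar>w c j\<bar>))"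
        by (intro mult_mono Ab[OF c] o) auto
      finally show "\<bar>(A ^\<^sub>m m) $$ (l,c) * ((Dop N d ^^ m) (w c) i - (Dop N d ^^ m) (w c) i')\<bar> \<le> bd m * (\<Sum>j<N. \<bar>w c j\<bar>)"
        unfolding bd_def by (simp add: algebra_simps)
    qed
    finally show ?thesis by (simp add: sum_distrib_left)
  qed
  define Z0 where "Z0 = (\<Sum>c<n. \<Sum>j<N. \<bar>\<Phi> 0 j c\<bar>)"
  define UU where "UU t = (\<Sum>c<n. \<Sum>j<N. \<bar>U t j c\<bar>)" for t
  have main: "\<bar>\<Phi> k i l - \<Phi> k i' l\<bar> \<le> bd k * Z0 + (\<Sum>t<k. bd (k - Suc t) * UU t)" for k
  proof -
    have cf: "\<Phi> k i l - \<Phi> k i' l = (\<Sum>c<n. (A ^\<^sub>m k) $$ (l,c) * ((Dop N d ^^ k) (\<lambda>j. \<Phi> 0 j c) i - (Dop N d ^^ k) (\<lambda>j. \<Phi> 0 j c) i'))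
       + (\<Sum>t<k. \<Sum>c<n. (A ^\<^sub>m (k - Suc t)) $$ (l,c) * ((Dop N d ^^ (k - Suc t)) (\<lambda>j. U t j c) i - (Dop N d ^^ (k - Suc t)) (\<lambda>j. U t j c) i'))"
    proof -
      have c1: "\<Phi> k i l = (\<Sum>c<n. (A ^\<^sub>m k) $$ (l,c) * (Dop N d ^^ k) (\<lambda>j. \<Phi> 0 j c) i)
     + (\<Sum>t<k. \<Sum>c<n. (A ^\<^sub>m (k - Suc t)) $$ (l,c) * (Dop N d ^^ (k - Suc t)) (\<lambda>j. U t j c) i)"
        by (rule net_closed_form[where \<Phi>=\<Phi> and U=U and k=k, OF A rec i l])
      have c2: "\<Phi> k i' l = (\<Sum>c<n. (A ^\<^sub>m k) $$ (l,c) * (Dop N d ^^ k) (\<lambda>j. \<Phi> 0 j c) i')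
     + (\<Sum>t<k. \<Sum>c<n. (A ^\<^sub>m (k - Suc t)) $$ (l,c) * (Dop N d ^^ (k - Suc t)) (\<lambda>j. U t j c) i')"
        by (rule net_closed_form[where \<Phi>=\<Phi> and U=U and k=k, OF A rec i' l])
      show ?thesis unfolding c1 c2 by (simp add: algebra_simps sum_subtractf)
    qed
    have "\<bar>\<Phi> k i l - \<Phi> k i' l\<bar> \<le> \<bar>\<Sum>c<n. (A ^\<^sub>m k) $$ (l,c) * ((Dop N d ^^ k) (\<lambda>j. \<Phi> 0 j c) i - (Dop N d ^^ k) (\<lambda>j. \<Phi> 0 j c) i')\<bar>
       + (\<Sum>t<k. \<bar>\<Sum>c<n. (A ^\<^sub>m (k - Suc t)) $$ (l,c) * ((Dop N d ^^ (k - Suc t)) (\<lambda>j. U t j c) i - (Dop N d ^^ (k - Suc t)) (\<lambda>j. U t j c) i')\<bar>)"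
      unfolding cf by (rule order_trans[OF abs_triangle_ineq add_left_mono[OF sum_abs]])
    also have "\<dots> \<le> bd k * Z0 + (\<Sum>t<k. bd (k - Suc t) * UU t)"
      unfolding Z0_def UU_def by (intro add_mono sum_mono termb)
    finally show ?thesis .
  qed
  show ?thesis
  proof (rule sandwich0[OF main])
    have "(\<lambda>k. bd k * Z0) \<longlonglongrightarrow> 0" by (rule tendsto_mult_left_zero[OF summable_LIMSEQ_zero[OF bs]])
    moreover have "(\<lambda>k. \<Sum>t<k. bd (k - Suc t) * UU t) \<longlonglongrightarrow> 0"
    proof (rule conv_tendsto_zero[OF b0 bs])
      show "\<And>t. 0 \<le> UU t" unfolding UU_def by (intro sum_nonneg) auto
      have "(\<lambda>t. \<Sum>j<N. \<bar>U t j c\<bar>) \<longlonglongrightarrow> 0" if "c < n" for c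
        using tendsto_sum[of "{..<N}" "\<lambda>j t. \<bar>U t j c\<bar>" "\<lambda>_. 0"] tendsto_rabs_zero[OF U] that by auto
      thus "UU \<longlonglongrightarrow> 0" unfolding UU_def
        using tendsto_sum[of "{..<n}" "\<lambda>c t. \<Sum>j<N. \<bar>U t j c\<bar>" "\<lambda>_. 0"] by auto
    qed
    ultimately show "(\<lambda>k. bd k * Z0 + (\<Sum>t<k. bd (k - Suc t) * UU t)) \<longlonglongrightarrow> 0"
      using tendsto_add[of _ 0 _ _ 0] by fastforce
  qed
qed

end

lemma sum_split_add: "(\<Sum>c<na+(nb::nat). (f c :: real)) = (\<Sum>c<na. f c) + (\<Sum>c<nb. f (na + c))"
  by (induct nb) (auto simp: add.assoc)

lemma leftblock_mult:
  fixes C :: "real mat"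
  assumes C: "C \<in> carrier_mat p n1" and a: "a \<in> carrier_vec n1" and b: "b \<in> carrier_vec n2"
  shows "mat p (n1+n2) (\<lambda>(r, c). if c < n1 then C $$ (r, c) else 0) *\<^sub>v (a @\<^sub>v b) = C *\<^sub>v a"
proof (rule eq_vecI)
  fix i assume "i < dim_vec (C *\<^sub>v a)"
  hence i: "i < p" using C by simp
  have "(mat p (n1+n2) (\<lambda>(r, c). if c < n1 then C $$ (r, c) else 0) *\<^sub>v (a @\<^sub>v b)) $ i
      = (\<Sum>c<n1+n2. (if c < n1 then C $$ (i, c) else 0) * (a @\<^sub>v b) $ c)"
    using a b i by (subst mult_vec_entry[of _ p "n1+n2"]) auto
  also have "\<dots> = (\<Sum>c<n1. C $$ (i, c) * a $ c)"
    unfolding sum_split_add using a b by simp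
  also have "\<dots> = (C *\<^sub>v a) $ i" using C a i by (subst mult_vec_entry[of _ p n1]) auto
  finally show "(mat p (n1+n2) (\<lambda>(r, c). if c < n1 then C $$ (r, c) else 0) *\<^sub>v (a @\<^sub>v b)) $ i = (C *\<^sub>v a) $ i" .
qed (use C in auto)

lemma rowblock_mult:
  fixes P Q :: "real mat"
  assumes P: "P \<in> carrier_mat n1 m" and Q: "Q \<in> carrier_mat n2 m" and w: "w \<in> carrier_vec m"
  shows "mat (n1+n2) m (\<lambda>(r, c). if r < n1 then P $$ (r, c) else Q $$ (r - n1, c)) *\<^sub>v w = (P *\<^sub>v w) @\<^sub>v (Q *\<^sub>v w)"
proof (rule eq_vecI)
  fix i assume "i < dim_vec ((P *\<^sub>v w) @\<^sub>v (Q *\<^sub>v w))"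
  hence i: "i < n1 + n2" using P Q by simp
  show "(mat (n1+n2) m (\<lambda>(r, c). if r < n1 then P $$ (r, c) else Q $$ (r - n1, c)) *\<^sub>v w) $ i = ((P *\<^sub>v w) @\<^sub>v (Q *\<^sub>v w)) $ i"
    using i P Q w by (subst mult_vec_entry[of _ "n1+n2" m], auto simp: scalar_prod_def atLeast0LessThan)
qed (use P Q in auto)

lemma agent_transform:
  fixes Ag Bg Cg Cm Ah Bh Eh Ch Dh A B C As Cs :: "real mat" and x xi wk :: "nat \<Rightarrow> real vec"
  assumes Ag: "Ag \<in> carrier_mat n n" and Bg: "Bg \<in> carrier_mat n m" and Cg: "Cg \<in> carrier_mat p n"
    and Cm: "Cm \<in> carrier_mat q n" and Ah: "Ah \<in> carrier_mat s s" and Bh: "Bh \<in> carrier_mat s q"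
    and Eh: "Eh \<in> carrier_mat s mA" and Ch: "Ch \<in> carrier_mat m s" and Dh: "Dh \<in> carrier_mat m mA"
    and As: "As \<in> carrier_mat r r" and Cs: "Cs \<in> carrier_mat mA r"
    and A: "A \<in> carrier_mat nA nA" and B: "B \<in> carrier_mat nA mA" and C: "C \<in> carrier_mat p nA"
    and IF: "interconnection_form Ag Bg Cg Cm Ah Bh Eh Ch Dh A B C As Cs"
    and x0: "x 0 \<in> carrier_vec n" and xi0: "xi 0 \<in> carrier_vec s"
    and wk: "\<And>k. wk k \<in> carrier_vec mA"
    and xeq: "\<And>k. x (Suc k) = Ag *\<^sub>v x k + Bg *\<^sub>v (Ch *\<^sub>v xi k - Dh *\<^sub>v wk k)"
    and xieq: "\<And>k. xi (Suc k) = Ah *\<^sub>v xi k + Bh *\<^sub>v (Cm *\<^sub>v x k) - Eh *\<^sub>v wk k"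
  shows "\<exists>xb om. (\<forall>k. xb k \<in> carrier_vec nA \<and> om k \<in> carrier_vec r) \<and>
     (\<forall>k. xb (Suc k) = A *\<^sub>v xb k + (B * Cs) *\<^sub>v om k - B *\<^sub>v wk k) \<and>
     (\<forall>k. om (Suc k) = As *\<^sub>v om k) \<and> (\<forall>k. Cg *\<^sub>v x k = C *\<^sub>v xb k)"
proof -
  have xc: "x k \<in> carrier_vec n" for k
  proof (cases k)
    case 0 thus ?thesis using x0 by simp
  next
    case (Suc k')
    have "dim_vec (Ag *\<^sub>v x k' + Bg *\<^sub>v (Ch *\<^sub>v xi k' - Dh *\<^sub>v wk k')) = n" using Bg by simp
    thus ?thesis unfolding Suc xeq carrier_vec_def by simp
  qed
  have xic: "xi k \<in> carrier_vec s" for k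
  proof (cases k)
    case 0 thus ?thesis using xi0 by simp
  next
    case (Suc k')
    have "dim_vec (Ah *\<^sub>v xi k' + Bh *\<^sub>v (Cm *\<^sub>v x k') - Eh *\<^sub>v wk k') = s" using Eh by simp
    thus ?thesis unfolding Suc xieq carrier_vec_def by simp
  qed
  define Atil where "Atil = four_block_mat Ag (Bg * Ch) (Bh * Cm) Ah"
  define Btil where "Btil = mat (n + s) mA (\<lambda>(r, c). if r < n then (Bg * Dh) $$ (r, c) else Eh $$ (r - n, c))"
  define Ctil where "Ctil = mat p (n + s) (\<lambda>(r, c). if c < n then Cg $$ (r, c) else 0)"
  define Abar where "Abar = four_block_mat A (B * Cs) (0\<^sub>m r nA) As"
  define Bbar where "Bbar = mat (nA + r) mA (\<lambda>(ra, c). if ra < nA then B $$ (ra, c) else 0)"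
  define Cbar where "Cbar = mat p (nA + r) (\<lambda>(ra, c). if c < nA then C $$ (ra, c) else 0)"
  have d1: "dim_row Ag = n" "dim_row Ah = s" "dim_row A = nA" "dim_row As = r" "dim_col B = mA" "dim_row C = p"
    using Ag Ah A As B C by auto
  have IF2: "nA + r = n + s \<and> (\<exists>T. T \<in> carrier_mat (n + s) (n + s) \<and> invertible_mat T \<and>
              T * Atil = Abar * T \<and> T * Btil = Bbar \<and> Ctil = Cbar * T)"
    using IF unfolding interconnection_form_def Let_def d1 Atil_def Btil_def Ctil_def Abar_def Bbar_def Cbar_def .
  hence dimeq: "nA + r = n + s" by blast
  from IF2 obtain T where T: "T \<in> carrier_mat (n + s) (n + s)" and TA: "T * Atil = Abar * T"
    and TB: "T * Btil = Bbar" and TC: "Ctil = Cbar * T" by blast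
  define X where "X k = x k @\<^sub>v xi k" for k
  have Xc: "X k \<in> carrier_vec (n + s)" for k unfolding X_def using xc xic by auto
  have Atc: "Atil \<in> carrier_mat (n + s) (n + s)" unfolding Atil_def using Ag Bg Ch Bh Cm Ah by auto
  have Btc: "Btil \<in> carrier_mat (n + s) mA" unfolding Btil_def by auto
  have Abc: "Abar \<in> carrier_mat (nA + r) (nA + r)" unfolding Abar_def using A B Cs As by auto
  have Bbc: "Bbar \<in> carrier_mat (nA + r) mA" unfolding Bbar_def by auto
  have Xrec: "X (Suc k) = Atil *\<^sub>v X k - Btil *\<^sub>v wk k" for k
  proof -
    have e1: "Atil *\<^sub>v X k = (Ag *\<^sub>v x k + (Bg * Ch) *\<^sub>v xi k) @\<^sub>v ((Bh * Cm) *\<^sub>v x k + Ah *\<^sub>v xi k)"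
      unfolding Atil_def X_def using Ag Bg Ch Bh Cm Ah xc[of k] xic[of k] xc[of "Suc k"] xic[of "Suc k"] by (intro four_block_mat_mult_vec) auto
    have e2: "Btil *\<^sub>v wk k = ((Bg * Dh) *\<^sub>v wk k) @\<^sub>v (Eh *\<^sub>v wk k)"
      unfolding Btil_def using Bg Dh Eh wk[of k] by (intro rowblock_mult) auto
    show ?thesis
    proof (rule eq_vecI)
      fix i assume "i < dim_vec (Atil *\<^sub>v X k - Btil *\<^sub>v wk k)"
      hence i: "i < n + s" using Btc by simp
      show "X (Suc k) $ i = (Atil *\<^sub>v X k - Btil *\<^sub>v wk k) $ i"
      proof (cases "i < n")
        case True
        have "X (Suc k) $ i = x (Suc k) $ i" unfolding X_def using True xc[of k] xic[of k] xc[of "Suc k"] xic[of "Suc k"] by simp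
        also have "\<dots> = (Ag *\<^sub>v x k) $ i + ((Bg * Ch) *\<^sub>v xi k) $ i - ((Bg * Dh) *\<^sub>v wk k) $ i"
          unfolding xeq using True Ag Bg Ch Dh xc[of k] xic[of k] xc[of "Suc k"] xic[of "Suc k"] wk[of k]
          by (simp add: mult_minus_distrib_mat_vec[of Bg n m])
        also have "\<dots> = (Atil *\<^sub>v X k - Btil *\<^sub>v wk k) $ i"
          unfolding e1 e2 using True Ag Bg Ch Dh xc[of k] xic[of k] xc[of "Suc k"] xic[of "Suc k"] wk[of k] i Eh Bh Cm Ah by simp
        finally show ?thesis .
      next
        case False
        have "X (Suc k) $ i = xi (Suc k) $ (i - n)" unfolding X_def using False xc[of k] xic[of k] xc[of "Suc k"] xic[of "Suc k"] i by simp
        also have "\<dots> = (Ah *\<^sub>v xi k) $ (i - n) + ((Bh * Cm) *\<^sub>v x k) $ (i - n) - (Eh *\<^sub>v wk k) $ (i - n)"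
          unfolding xieq using False i Ah Bh Cm Eh xc[of k] xic[of k] xc[of "Suc k"] xic[of "Suc k"] wk[of k] by simp
        also have "\<dots> = (Atil *\<^sub>v X k - Btil *\<^sub>v wk k) $ i"
          unfolding e1 e2 using False Ag Bg Ch Dh xc[of k] xic[of k] xc[of "Suc k"] xic[of "Suc k"] wk[of k] i Eh Bh Cm Ah by simp
        finally show ?thesis .
      qed
    qed (use Btc Xc[of "Suc k"] in auto)
  qed
  define Z where "Z k = T *\<^sub>v X k" for k
  have Zc: "Z k \<in> carrier_vec (nA + r)" for k unfolding Z_def using T Xc dimeq by auto
  have Zrec: "Z (Suc k) = Abar *\<^sub>v Z k - Bbar *\<^sub>v wk k" for k
  proof -
    have "Z (Suc k) = T *\<^sub>v (Atil *\<^sub>v X k) - T *\<^sub>v (Btil *\<^sub>v wk k)"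
      unfolding Z_def Xrec using T Atc Btc Xc wk by (intro mult_minus_distrib_mat_vec) auto
    also have "T *\<^sub>v (Atil *\<^sub>v X k) = (T * Atil) *\<^sub>v X k" using T Atc Xc by simp
    also have "T *\<^sub>v (Btil *\<^sub>v wk k) = (T * Btil) *\<^sub>v wk k" using T Btc wk by simp
    also have "(T * Atil) *\<^sub>v X k = Abar *\<^sub>v Z k" unfolding TA Z_def using T Abc Xc dimeq by simp
    finally show ?thesis unfolding TB .
  qed
  define xb where "xb k = vec nA (\<lambda>l. Z k $ l)" for k
  define om where "om k = vec r (\<lambda>l. Z k $ (nA + l))" for k
  have Zsplit: "Z k = xb k @\<^sub>v om k" for k
    by (rule eq_vecI) (use Zc in \<open>auto simp: xb_def om_def\<close>)
  have xbc: "xb k \<in> carrier_vec nA" "om k \<in> carrier_vec r" for k unfolding xb_def om_def by auto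
  have AZ: "Abar *\<^sub>v Z k = (A *\<^sub>v xb k + (B * Cs) *\<^sub>v om k) @\<^sub>v (0\<^sub>m r nA *\<^sub>v xb k + As *\<^sub>v om k)" for k
    unfolding Zsplit Abar_def using A B Cs As xbc by (intro four_block_mat_mult_vec) auto
  have BW: "Bbar *\<^sub>v wk k = (B *\<^sub>v wk k) @\<^sub>v (0\<^sub>m r mA *\<^sub>v wk k)" for k
  proof -
    have "Bbar = mat (nA + r) mA (\<lambda>(ra, c). if ra < nA then B $$ (ra, c) else (0\<^sub>m r mA) $$ (ra - nA, c))"
      unfolding Bbar_def by (rule eq_matI) auto
    thus ?thesis using rowblock_mult[OF B _ wk, of "0\<^sub>m r mA" r] by simp
  qed
  have R1: "xb (Suc k) = A *\<^sub>v xb k + (B * Cs) *\<^sub>v om k - B *\<^sub>v wk k" for k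
  proof (rule eq_vecI)
    fix l assume "l < dim_vec (A *\<^sub>v xb k + (B * Cs) *\<^sub>v om k - B *\<^sub>v wk k)"
    hence l: "l < nA" using B by simp
    have "xb (Suc k) $ l = (Abar *\<^sub>v Z k - Bbar *\<^sub>v wk k) $ l" unfolding xb_def Zrec[symmetric] using l by simp
    also have "\<dots> = (A *\<^sub>v xb k + (B * Cs) *\<^sub>v om k - B *\<^sub>v wk k) $ l"
      unfolding AZ BW using l A B Cs As xbc[of k] wk[of k] Bbc by simp
    finally show "xb (Suc k) $ l = (A *\<^sub>v xb k + (B * Cs) *\<^sub>v om k - B *\<^sub>v wk k) $ l" .
  qed (use B xbc[of "Suc k"] in auto)
  have R2: "om (Suc k) = As *\<^sub>v om k" for k
  proof (rule eq_vecI)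
    fix l assume "l < dim_vec (As *\<^sub>v om k)"
    hence l: "l < r" using As by simp
    have "om (Suc k) $ l = (Abar *\<^sub>v Z k - Bbar *\<^sub>v wk k) $ (nA + l)" unfolding om_def Zrec[symmetric] using l by simp
    also have "\<dots> = (As *\<^sub>v om k) $ l"
      unfolding AZ BW using l A B Cs As xbc[of k] wk[of k] Bbc by simp
    finally show "om (Suc k) $ l = (As *\<^sub>v om k) $ l" .
  qed (use As xbc[of "Suc k"] in auto)
  have Cbc: "Cbar \<in> carrier_mat p (n + s)" unfolding Cbar_def using dimeq by simp
  have R3: "Cg *\<^sub>v x k = C *\<^sub>v xb k" for k
  proof -
    have "Cg *\<^sub>v x k = Ctil *\<^sub>v X k" unfolding Ctil_def X_def by (rule leftblock_mult[symmetric, OF Cg xc xic])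
    also have "Ctil *\<^sub>v X k = Cbar *\<^sub>v Z k" unfolding TC Z_def by (rule assoc_mult_mat_vec[OF Cbc T Xc])
    also have "\<dots> = C *\<^sub>v xb k" unfolding Zsplit Cbar_def by (rule leftblock_mult[OF C xbc])
    finally show ?thesis .
  qed
  show ?thesis using xbc R1 R2 R3 by blast
qed

lemma graph_facts:
  fixes N :: nat and a :: "nat \<Rightarrow> nat \<Rightarrow> real"
  assumes a_nonneg: "\<forall>i<N. \<forall>j<N. a i j \<ge> 0"
    and a_diag: "\<forall>i<N. a i i = 0"
    and tree: "has_directed_spanning_tree N a"
  shows "stoch N (dcoef N a) \<and> (\<exists>r par \<gamma> L. 0 < \<gamma> \<and> \<gamma> \<le> 1/2 \<and> (\<forall>i<N. \<gamma> \<le> dcoef N a i i) \<and>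
     (\<forall>i<N. i \<noteq> r \<longrightarrow> par i < N \<and> \<gamma> \<le> dcoef N a i (par i)) \<and> r < N \<and> 0 < L \<and>
     (\<forall>i<N. \<exists>m\<le>L. (par ^^ m) i = r))"
proof -
  let ?d = "dcoef N a"
  have din: "0 \<le> in_degree N a i" if "i < N" for i
    unfolding in_degree_def using a_nonneg that by (intro sum_nonneg) auto
  have dnn: "0 \<le> ?d i j" if "i < N" "j < N" for i j
    using din[OF that(1)] a_nonneg that unfolding dcoef_def by auto
  have dpos: "0 < ?d i j" if "i < N" "j < N" "j = i \<or> a i j > 0" for i j
    using din[OF that(1)] that unfolding dcoef_def by auto
  have drow: "(\<Sum>j<N. ?d i j) = 1" if i: "i < N" for i
  proof -
    let ?D = "in_degree N a i"
    have "(\<Sum>j<N. ?d i j) = (\<Sum>j<N. (a i j + (if j = i then 1 else 0)) / (1 + ?D))"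
      unfolding dcoef_def using a_diag i by (intro sum.cong) auto
    also have "\<dots> = (\<Sum>j<N. a i j + (if j = i then 1 else 0)) / (1 + ?D)"
      by (rule sum_divide_distrib[symmetric])
    also have "(\<Sum>j<N. a i j + (if j = i then 1 else 0)) = ?D + 1"
      unfolding in_degree_def sum.distrib using i by simp
    finally show ?thesis using din[OF i] by simp
  qed
  have st: "stoch N ?d" by (unfold_locales) (use dnn drow in auto)
  from tree obtain r par where r: "r < N"
    and pr: "\<forall>i<N. i \<noteq> r \<longrightarrow> par i < N \<and> a i (par i) > 0"
    and reach: "\<forall>i<N. \<exists>k. (par ^^ k) i = r \<and> (\<forall>l<k. (par ^^ l) i \<noteq> r)"
    unfolding has_directed_spanning_tree_def by blast
  define S where "S = (\<lambda>i. ?d i i) ` {..<N} \<union> (\<lambda>i. ?d i (par i)) ` {i. i < N \<and> i \<noteq> r}"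
  have Sfin: "finite S" unfolding S_def by auto
  have Sne: "S \<noteq> {}" unfolding S_def using r by auto
  have Spos: "\<forall>x\<in>S. 0 < x" unfolding S_def using dpos pr by auto
  define \<gamma> where "\<gamma> = min (Min S) (1/2)"
  have g0: "0 < \<gamma>" unfolding \<gamma>_def using Spos Sfin Sne by (simp add: Min_gr_iff)
  have gd: "\<gamma> \<le> ?d i i" if "i < N" for i
    unfolding \<gamma>_def using that Sfin by (intro min.coboundedI1 Min_le) (auto simp: S_def)
  have gp: "\<gamma> \<le> ?d i (par i)" if "i < N" "i \<noteq> r" for i
    unfolding \<gamma>_def using that Sfin by (intro min.coboundedI1 Min_le) (auto simp: S_def)
  define dep where "dep i = (SOME k. (par ^^ k) i = r)" for i
  have dep: "(par ^^ dep i) i = r" if "i < N" for i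
    using reach that unfolding dep_def by (metis (mono_tags, lifting) someI)
  define L where "L = Suc (\<Sum>i<N. dep i)"
  have Lp: "\<exists>m\<le>L. (par ^^ m) i = r" if i: "i < N" for i
  proof (intro exI conjI)
    show "(par ^^ dep i) i = r" by (rule dep[OF i])
    have "dep i \<le> (\<Sum>i<N. dep i)" using i by (intro member_le_sum) auto
    thus "dep i \<le> L" unfolding L_def by simp
  qed
  show ?thesis
    using st g0 gd gp pr r Lp unfolding \<gamma>_def[symmetric]
    by (intro conjI exI[of _ r] exI[of _ par] exI[of _ \<gamma>] exI[of _ L]) (auto simp: L_def \<gamma>_def)
qed

lemma Glin: "(\<Sum>j\<in>J. (d j :: real) * ((\<Sum>c\<in>C. a c * f i c) - (\<Sum>c\<in>C. a c * f j c)))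
   = (\<Sum>c\<in>C. a c * (\<Sum>j\<in>J. d j * (f i c - f j c)))"
proof -
  have "(\<Sum>j\<in>J. d j * ((\<Sum>c\<in>C. a c * f i c) - (\<Sum>c\<in>C. a c * f j c)))
     = (\<Sum>j\<in>J. \<Sum>c\<in>C. a c * (d j * (f i c - f j c)))"
    by (simp add: sum_subtractf[symmetric] sum_distrib_left algebra_simps)
  also have "\<dots> = (\<Sum>c\<in>C. \<Sum>j\<in>J. a c * (d j * (f i c - f j c)))" by (rule sum.swap)
  also have "\<dots> = (\<Sum>c\<in>C. a c * (\<Sum>j\<in>J. d j * (f i c - f j c)))" by (simp add: sum_distrib_left)
  finally show ?thesis .
qed

lemma minus_entry: assumes "A \<in> carrier_mat nr nc" "B \<in> carrier_mat nr nc" "i < nr" "j < nc"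
  shows "(A - B) $$ (i,j) = A $$ (i,j) - (B $$ (i,j) :: 'a :: ab_group_add)"
  using assms by simp

theorem theorem3:
  fixes N :: nat and a :: "nat \<Rightarrow> nat \<Rightarrow> real"
    and n m q s r :: "nat \<Rightarrow> nat"
    and Ag Bg Cg Cmg :: "nat \<Rightarrow> real mat"
    and Ah Bh Eh Ch Dh :: "nat \<Rightarrow> real mat"
    and As Cs :: "nat \<Rightarrow> real mat"
    and A B C K H :: "real mat" and nA mA p nq :: nat
    and x xi xh eta :: "nat \<Rightarrow> nat \<Rightarrow> real vec"
  assumes N2: "N \<ge> 2"
    (* agents *)
    and agent_dims: "\<forall>i<N. Ag i \<in> carrier_mat (n i) (n i) \<and> Bg i \<in> carrier_mat (n i) (m i) \<and>
        Cg i \<in> carrier_mat p (n i) \<and> Cmg i \<in> carrier_mat (q i) (n i)"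
    and agent_stab: "\<forall>i<N. stabilizable (Ag i) (Bg i)"
    and agent_det: "\<forall>i<N. detectable (Cg i) (Ag i)"
    and agent_rinv: "\<forall>i<N. right_invertible (Cg i) (Ag i) (Bg i)"
    and agent_det_m: "\<forall>i<N. detectable (Cmg i) (Ag i)"
    (* target model (C,A,B) *)
    and target_dims: "A \<in> carrier_mat nA nA" "B \<in> carrier_mat nA mA" "C \<in> carrier_mat p nA"
    and rankC: "vec_space.rank p C = p"
    and unif: "invertible_uniform_rank C A B nq"
    and nq_ge: "\<forall>i<N. max_inf_zero_order (Cg i) (Ag i) (Bg i) \<le> nq"
    and no_zeros: "\<forall>z. \<not> invariant_zero C A B z"
    and A_disc: "\<forall>ev. eigenvalue (map_mat complex_of_real A) ev \<longrightarrow> cmod ev \<le> 1"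
    (* pre-compensators *)
    and pre_dims: "\<forall>i<N. Ah i \<in> carrier_mat (s i) (s i) \<and> Bh i \<in> carrier_mat (s i) (q i) \<and>
        Eh i \<in> carrier_mat (s i) mA \<and> Ch i \<in> carrier_mat (m i) (s i) \<and> Dh i \<in> carrier_mat (m i) mA \<and>
        As i \<in> carrier_mat (r i) (r i) \<and> Cs i \<in> carrier_mat mA (r i)"
    and pre_form: "\<forall>i<N. interconnection_form (Ag i) (Bg i) (Cg i) (Cmg i)
        (Ah i) (Bh i) (Eh i) (Ch i) (Dh i) A B C (As i) (Cs i)"
    and As_stable: "\<forall>i<N. schur_stable (As i)"
    (* protocol gains *)
    and K_dim: "K \<in> carrier_mat mA nA" and H_dim: "H \<in> carrier_mat nA p"
    and K_stab: "schur_stable (A - B * K)" and H_stab: "schur_stable (A - H * C)"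
    (* network *)
    and a_nonneg: "\<forall>i<N. \<forall>j<N. a i j \<ge> 0"
    and a_diag: "\<forall>i<N. a i i = 0"
    and tree: "has_directed_spanning_tree N a"
    (* initial conditions (arbitrary) *)
    and init: "\<forall>i<N. x i 0 \<in> carrier_vec (n i) \<and> xi i 0 \<in> carrier_vec (s i) \<and>
        xh i 0 \<in> carrier_vec nA \<and> eta i 0 \<in> carrier_vec nA"
    (* closed-loop dynamics: agents + protocol *)
    and agent_eq: "\<forall>i<N. \<forall>k. x i (Suc k) = Ag i *\<^sub>v x i k +
        Bg i *\<^sub>v (Ch i *\<^sub>v xi i k - Dh i *\<^sub>v (K *\<^sub>v eta i k))"
    and xi_eq: "\<forall>i<N. \<forall>k. xi i (Suc k) = Ah i *\<^sub>v xi i k + Bh i *\<^sub>v (Cmg i *\<^sub>v x i k)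
        - Eh i *\<^sub>v (K *\<^sub>v eta i k)"
    and xh_eq: "\<forall>i<N. \<forall>k. xh i (Suc k) = A *\<^sub>v xh i k
        - B *\<^sub>v (K *\<^sub>v vec nA (\<lambda>l. \<Sum>j<N. dcoef N a i j * ((eta i k) $ l - (eta j k) $ l)))
        + H *\<^sub>v (vec p (\<lambda>l. \<Sum>j<N. dcoef N a i j * ((Cg i *\<^sub>v x i k) $ l - (Cg j *\<^sub>v x j k) $ l))
                 - C *\<^sub>v xh i k)"
    and eta_eq: "\<forall>i<N. \<forall>k. eta i (Suc k) = (A - B * K) *\<^sub>v eta i k + A *\<^sub>v xh i k
        - A *\<^sub>v vec nA (\<lambda>l. \<Sum>j<N. dcoef N a i j * ((eta i k) $ l - (eta j k) $ l))"
  shows "\<forall>i<N. \<forall>j<N. \<forall>l<p.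
           (\<lambda>k. (Cg i *\<^sub>v x i k) $ l - (Cg j *\<^sub>v x j k) $ l) \<longlonglongrightarrow> 0"
proof -
  define d where "d = dcoef N a"
  have NK: "K \<in> carrier_mat mA nA" by (rule K_dim)
  note Ac = target_dims(1) and Bc = target_dims(2) and Cc = target_dims(3)
  have etac: "eta i k \<in> carrier_vec nA" if i: "i < N" for i k
  proof (cases k)
    case 0 thus ?thesis using init i by auto
  next
    case (Suc k')
    have "dim_vec ((A - B * K) *\<^sub>v eta i k' + A *\<^sub>v xh i k'
        - A *\<^sub>v vec nA (\<lambda>l. \<Sum>j<N. dcoef N a i j * ((eta i k') $ l - (eta j k') $ l))) = nA"
      using Ac by simp
    thus ?thesis using eta_eq i unfolding Suc carrier_vec_def by simp
  qed
  have xhc: "xh i k \<in> carrier_vec nA" if i: "i < N" for i k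
  proof (cases k)
    case 0 thus ?thesis using init i by auto
  next
    case (Suc k')
    have "dim_vec (A *\<^sub>v xh i k'
        - B *\<^sub>v (K *\<^sub>v vec nA (\<lambda>l. \<Sum>j<N. dcoef N a i j * ((eta i k') $ l - (eta j k') $ l)))
        + H *\<^sub>v (vec p (\<lambda>l. \<Sum>j<N. dcoef N a i j * ((Cg i *\<^sub>v x i k') $ l - (Cg j *\<^sub>v x j k') $ l))
                 - C *\<^sub>v xh i k')) = nA"
      using H_dim by simp
    thus ?thesis using xh_eq i unfolding Suc carrier_vec_def by simp
  qed
  have "\<forall>i<N. \<exists>xb om. (\<forall>k. xb k \<in> carrier_vec nA \<and> om k \<in> carrier_vec (r i)) \<and>
     (\<forall>k. xb (Suc k) = A *\<^sub>v xb k + (B * Cs i) *\<^sub>v om k - B *\<^sub>v (K *\<^sub>v eta i k)) \<and>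
     (\<forall>k. om (Suc k) = As i *\<^sub>v om k) \<and> (\<forall>k. Cg i *\<^sub>v x i k = C *\<^sub>v xb k)"
  proof (intro allI impI)
    fix i assume i: "i < N"
    show "\<exists>xb om. (\<forall>k. xb k \<in> carrier_vec nA \<and> om k \<in> carrier_vec (r i)) \<and>
     (\<forall>k. xb (Suc k) = A *\<^sub>v xb k + (B * Cs i) *\<^sub>v om k - B *\<^sub>v (K *\<^sub>v eta i k)) \<and>
     (\<forall>k. om (Suc k) = As i *\<^sub>v om k) \<and> (\<forall>k. Cg i *\<^sub>v x i k = C *\<^sub>v xb k)"
    proof (rule agent_transform[where wk = "\<lambda>k. K *\<^sub>v eta i k"])
      show "Ag i \<in> carrier_mat (n i) (n i)" "Bg i \<in> carrier_mat (n i) (m i)" "Cg i \<in> carrier_mat p (n i)"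
        "Cmg i \<in> carrier_mat (q i) (n i)" using agent_dims i by auto
      show "Ah i \<in> carrier_mat (s i) (s i)" "Bh i \<in> carrier_mat (s i) (q i)" "Eh i \<in> carrier_mat (s i) mA"
        "Ch i \<in> carrier_mat (m i) (s i)" "Dh i \<in> carrier_mat (m i) mA" "As i \<in> carrier_mat (r i) (r i)"
        "Cs i \<in> carrier_mat mA (r i)" using pre_dims i by auto
      show "A \<in> carrier_mat nA nA" "B \<in> carrier_mat nA mA" "C \<in> carrier_mat p nA" by (rule target_dims)+
      show "interconnection_form (Ag i) (Bg i) (Cg i) (Cmg i) (Ah i) (Bh i) (Eh i) (Ch i) (Dh i) A B C (As i) (Cs i)"
        using pre_form i by auto
      show "x i 0 \<in> carrier_vec (n i)" "xi i 0 \<in> carrier_vec (s i)" using init i by auto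
      show "\<And>k. K *\<^sub>v eta i k \<in> carrier_vec mA" using K_dim etac[OF i] by auto
      show "\<And>k. x i (Suc k) = Ag i *\<^sub>v x i k + Bg i *\<^sub>v (Ch i *\<^sub>v xi i k - Dh i *\<^sub>v (K *\<^sub>v eta i k))"
        using agent_eq i by auto
      show "\<And>k. xi i (Suc k) = Ah i *\<^sub>v xi i k + Bh i *\<^sub>v (Cmg i *\<^sub>v x i k) - Eh i *\<^sub>v (K *\<^sub>v eta i k)"
        using xi_eq i by auto
    qed
  qed
  then obtain XB OM where XBc: "\<And>i k. i < N \<Longrightarrow> XB i k \<in> carrier_vec nA \<and> OM i k \<in> carrier_vec (r i)"
    and XBrec: "\<And>i k. i < N \<Longrightarrow> XB i (Suc k) = A *\<^sub>v XB i k + (B * Cs i) *\<^sub>v OM i k - B *\<^sub>v (K *\<^sub>v eta i k)"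
    and OMrec: "\<And>i k. i < N \<Longrightarrow> OM i (Suc k) = As i *\<^sub>v OM i k"
    and Out: "\<And>i k. i < N \<Longrightarrow> Cg i *\<^sub>v x i k = C *\<^sub>v XB i k"
    by metis
  define X where "X i k l = XB i k $ l" for i k l
  define Eta where "Eta i k l = eta i k $ l" for i k l
  define Xh where "Xh i k l = xh i k $ l" for i k l
  define W where "W i k mm = (\<Sum>c<nA. K $$ (mm,c) * Eta i k c)" for i k mm
  define Dist where "Dist i k mm = (\<Sum>c<r i. Cs i $$ (mm,c) * OM i k $ c)" for i k mm
  define Zh where "Zh i k l = (\<Sum>j<N. d i j * (Eta i k l - Eta j k l))" for i k l
  define Eps where "Eps i k l = (\<Sum>j<N. d i j * (X i k l - X j k l))" for i k l
  have Csc: "Cs i \<in> carrier_mat mA (r i)" "As i \<in> carrier_mat (r i) (r i)" if "i < N" for i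
    using pre_dims that by auto
  have RX: "X i (Suc k) l = (\<Sum>c<nA. A $$ (l,c) * X i k c) + (\<Sum>mm<mA. B $$ (l,mm) * (Dist i k mm - W i k mm))"
    if i: "i < N" and l: "l < nA" for i k l
  proof -
    have c1: "XB i k \<in> carrier_vec nA" "OM i k \<in> carrier_vec (r i)" using XBc[OF i] by auto
    have c2: "eta i k \<in> carrier_vec nA" by (rule etac[OF i])
    have "X i (Suc k) l = (A *\<^sub>v XB i k) $ l + (B *\<^sub>v (Cs i *\<^sub>v OM i k)) $ l - (B *\<^sub>v (K *\<^sub>v eta i k)) $ l"
      unfolding X_def XBrec[OF i] using Ac Bc Csc[OF i] c1 c2 K_dim l by simp
    also have "\<dots> = (\<Sum>c<nA. A $$ (l,c) * X i k c) + (\<Sum>mm<mA. B $$ (l,mm) * Dist i k mm) - (\<Sum>mm<mA. B $$ (l,mm) * W i k mm)"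
      using Ac Bc Csc[OF i] c1 c2 K_dim l
      by (simp add: mult_vec_entry[of _ nA nA] mult_vec_entry[of _ nA mA] mult_vec_entry[of _ mA "r i"]
          mult_vec_entry[of _ mA nA] X_def Dist_def W_def Eta_def del: index_mult_mat_vec)
    finally show ?thesis by (simp add: right_diff_distrib sum_subtractf)
  qed
  have REta: "Eta i (Suc k) l = (\<Sum>c<nA. (A - B * K) $$ (l,c) * Eta i k c) + (\<Sum>c<nA. A $$ (l,c) * Xh i k c)
       - (\<Sum>c<nA. A $$ (l,c) * Zh i k c)"
    if i: "i < N" and l: "l < nA" for i k l
  proof -
    have c2: "eta i k \<in> carrier_vec nA" "xh i k \<in> carrier_vec nA" by (rule etac[OF i], rule xhc[OF i])
    have BK: "A - B * K \<in> carrier_mat nA nA" using Ac Bc K_dim by auto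
    have "Eta i (Suc k) l = ((A - B * K) *\<^sub>v eta i k) $ l + (A *\<^sub>v xh i k) $ l
        - (A *\<^sub>v vec nA (\<lambda>l. \<Sum>j<N. d i j * ((eta i k) $ l - (eta j k) $ l))) $ l"
      unfolding Eta_def using eta_eq i Ac Bc K_dim c2 l unfolding d_def by simp
    also have "\<dots> = (\<Sum>c<nA. (A - B * K) $$ (l,c) * Eta i k c) + (\<Sum>c<nA. A $$ (l,c) * Xh i k c)
       - (\<Sum>c<nA. A $$ (l,c) * Zh i k c)"
      using Ac BK c2 l
      by (simp add: mult_vec_entry[of _ nA nA] Eta_def Xh_def Zh_def del: index_mult_mat_vec)
    finally show ?thesis .
  qed
  have RXh: "Xh i (Suc k) l = (\<Sum>c<nA. A $$ (l,c) * Xh i k c) - (\<Sum>mm<mA. B $$ (l,mm) * (\<Sum>c<nA. K $$ (mm,c) * Zh i k c))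
       + (\<Sum>qq<p. H $$ (l,qq) * ((\<Sum>c<nA. C $$ (qq,c) * Eps i k c) - (\<Sum>c<nA. C $$ (qq,c) * Xh i k c)))"
    if i: "i < N" and l: "l < nA" for i k l
  proof -
    have c2: "eta i k \<in> carrier_vec nA" "xh i k \<in> carrier_vec nA" by (rule etac[OF i], rule xhc[OF i])
    have zeta: "(\<Sum>j<N. d i j * ((Cg i *\<^sub>v x i k) $ qq - (Cg j *\<^sub>v x j k) $ qq)) = (\<Sum>c<nA. C $$ (qq,c) * Eps i k c)"
      if qq: "qq < p" for qq
    proof -
      have "(\<Sum>j<N. d i j * ((Cg i *\<^sub>v x i k) $ qq - (Cg j *\<^sub>v x j k) $ qq))
          = (\<Sum>j<N. d i j * ((\<Sum>c<nA. C $$ (qq,c) * X i k c) - (\<Sum>c<nA. C $$ (qq,c) * X j k c)))"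
      proof (intro sum.cong refl)
        fix j assume "j \<in> {..<N}"
        hence j: "j < N" by simp
        show "d i j * ((Cg i *\<^sub>v x i k) $ qq - (Cg j *\<^sub>v x j k) $ qq) =
              d i j * ((\<Sum>c<nA. C $$ (qq,c) * X i k c) - (\<Sum>c<nA. C $$ (qq,c) * X j k c))"
          unfolding Out[OF i] Out[OF j] X_def using Cc qq XBc[OF i] XBc[OF j]
          by (simp add: mult_vec_entry[of _ p nA] del: index_mult_mat_vec)
      qed
      also have "\<dots> = (\<Sum>c<nA. C $$ (qq,c) * Eps i k c)" unfolding Eps_def by (rule Glin)
      finally show ?thesis .
    qed
    have "Xh i (Suc k) l = (A *\<^sub>v xh i k) $ l
        - (B *\<^sub>v (K *\<^sub>v vec nA (\<lambda>l. \<Sum>j<N. d i j * ((eta i k) $ l - (eta j k) $ l)))) $ l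
        + (H *\<^sub>v (vec p (\<lambda>l. \<Sum>j<N. d i j * ((Cg i *\<^sub>v x i k) $ l - (Cg j *\<^sub>v x j k) $ l))
                 - C *\<^sub>v xh i k)) $ l"
      unfolding Xh_def using xh_eq i Ac Bc K_dim H_dim Cc c2 l unfolding d_def by simp
    also have "\<dots> = (\<Sum>c<nA. A $$ (l,c) * Xh i k c) - (\<Sum>mm<mA. B $$ (l,mm) * (\<Sum>c<nA. K $$ (mm,c) * Zh i k c))
       + (\<Sum>qq<p. H $$ (l,qq) * ((\<Sum>j<N. d i j * ((Cg i *\<^sub>v x i k) $ qq - (Cg j *\<^sub>v x j k) $ qq)) - (\<Sum>c<nA. C $$ (qq,c) * Xh i k c)))"
      using Ac Bc K_dim H_dim Cc c2 l
      by (simp add: mult_vec_entry[of _ nA nA] mult_vec_entry[of _ nA mA] mult_vec_entry[of _ mA nA]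
          mult_vec_entry[of _ nA p] mult_vec_entry[of _ p nA] Eta_def Xh_def Zh_def del: index_mult_mat_vec)
    also have "\<dots> = (\<Sum>c<nA. A $$ (l,c) * Xh i k c) - (\<Sum>mm<mA. B $$ (l,mm) * (\<Sum>c<nA. K $$ (mm,c) * Zh i k c))
       + (\<Sum>qq<p. H $$ (l,qq) * ((\<Sum>c<nA. C $$ (qq,c) * Eps i k c) - (\<Sum>c<nA. C $$ (qq,c) * Xh i k c)))"
      using zeta by simp
    finally show ?thesis .
  qed
  have ROM: "OM i (Suc k) $ l = (\<Sum>c<r i. As i $$ (l,c) * OM i k $ c) + 0"
    if i: "i < N" and l: "l < r i" for i k l
    unfolding OMrec[OF i] using Csc[OF i] XBc[OF i] l by (simp add: mult_vec_entry[of _ "r i" "r i"] del: index_mult_mat_vec)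
  have Outs: "(Cg i *\<^sub>v x i k) $ l = (\<Sum>c<nA. C $$ (l,c) * X i k c)" if i: "i < N" and l: "l < p" for i k l
    unfolding Out[OF i] X_def using Cc XBc[OF i] l by (simp add: mult_vec_entry[of _ p nA] del: index_mult_mat_vec)
  from graph_facts[OF a_nonneg a_diag tree] obtain r0 par \<gamma> L where
    st: "stoch N d" and g0: "0 < \<gamma>" and gh: "\<gamma> \<le> 1/2" and gd: "\<forall>i<N. \<gamma> \<le> d i i"
    and gp: "\<forall>i<N. i \<noteq> r0 \<longrightarrow> par i < N \<and> \<gamma> \<le> d i (par i)" and r0: "r0 < N" and L0: "0 < L"
    and Lp: "\<forall>i<N. \<exists>m\<le>L. (par ^^ m) i = r0"
    unfolding d_def by blast
  have gL: "\<gamma> ^ L < 1"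
  proof -
    have "\<gamma> ^ L \<le> \<gamma> ^ 1" using g0 gh L0 by (intro power_decreasing) auto
    thus ?thesis using gh by simp
  qed
  have drow: "(\<Sum>j<N. d i j) = 1" if "i < N" for i using st that unfolding stoch_def by auto
  have OM0: "(\<lambda>k. OM i k $ c) \<longlonglongrightarrow> 0" if i: "i < N" and c: "c < r i" for i c
    by (rule schur_input_to_zero[where z = "\<lambda>k l. OM i k $ l" and u = "\<lambda>k l. 0", OF Csc(2)[OF i] _ _ _ c])
       (use As_stable i ROM[OF i] in auto)
  have Dist0: "(\<lambda>k. Dist i k mm) \<longlonglongrightarrow> 0" if i: "i < N" for i mm
    unfolding Dist_def by (rule tendsto_null_sum, rule tendsto_mult_right_zero, rule OM0[OF i]) auto
  define E where "E i k l = Eps i k l - Xh i k l" for i k l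
  define dD where "dD i k mm = (\<Sum>j<N. d i j * (Dist i k mm - Dist j k mm))" for i k mm
  have dD0: "(\<lambda>k. dD i k mm) \<longlonglongrightarrow> 0" if i: "i < N" for i mm
    unfolding dD_def
    by (rule tendsto_null_sum, rule tendsto_mult_right_zero, rule tendsto_diff[of _ 0 _ _ 0, simplified])
       (use Dist0 i in auto)
  have EpsRec: "Eps i (Suc k) l = (\<Sum>c<nA. A $$ (l,c) * Eps i k c)
     + ((\<Sum>mm<mA. B $$ (l,mm) * dD i k mm) - (\<Sum>mm<mA. B $$ (l,mm) * (\<Sum>c<nA. K $$ (mm,c) * Zh i k c)))"
    if i: "i < N" and l: "l < nA" for i k l
  proof -
    define F where "F j mm = Dist j k mm - W j k mm" for j mm
    have "Eps i (Suc k) l = (\<Sum>j<N. d i j * (((\<Sum>c<nA. A $$ (l,c) * X i k c) - (\<Sum>c<nA. A $$ (l,c) * X j k c))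
          + ((\<Sum>mm<mA. B $$ (l,mm) * F i mm) - (\<Sum>mm<mA. B $$ (l,mm) * F j mm))))"
      unfolding Eps_def F_def by (intro sum.cong refl) (simp add: RX[OF i l] RX[OF _ l])
    also have "\<dots> = (\<Sum>j<N. d i j * ((\<Sum>c<nA. A $$ (l,c) * X i k c) - (\<Sum>c<nA. A $$ (l,c) * X j k c)))
        + (\<Sum>j<N. d i j * ((\<Sum>mm<mA. B $$ (l,mm) * F i mm) - (\<Sum>mm<mA. B $$ (l,mm) * F j mm)))"
      by (simp add: distrib_left sum.distrib)
    also have "\<dots> = (\<Sum>c<nA. A $$ (l,c) * Eps i k c) + (\<Sum>mm<mA. B $$ (l,mm) * (\<Sum>j<N. d i j * (F i mm - F j mm)))"
      unfolding Eps_def by (simp only: Glin[where d="d i" and f="\<lambda>j c. X j k c" and i=i] Glin[where d="d i" and f="F" and i=i])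
    also have "(\<Sum>mm<mA. B $$ (l,mm) * (\<Sum>j<N. d i j * (F i mm - F j mm)))
       = (\<Sum>mm<mA. B $$ (l,mm) * (dD i k mm - (\<Sum>c<nA. K $$ (mm,c) * Zh i k c)))"
    proof (intro sum.cong refl arg_cong[where f = "\<lambda>x. B $$ (l, _) * x"])
      fix mm
      have "(\<Sum>j<N. d i j * (F i mm - F j mm)) = dD i k mm - (\<Sum>j<N. d i j * (W i k mm - W j k mm))"
        unfolding F_def dD_def by (simp add: sum_subtractf[symmetric] algebra_simps)
      also have "(\<Sum>j<N. d i j * (W i k mm - W j k mm)) = (\<Sum>c<nA. K $$ (mm,c) * Zh i k c)"
        unfolding W_def Zh_def by (rule Glin)
      finally show "(\<Sum>j<N. d i j * (F i mm - F j mm)) = dD i k mm - (\<Sum>c<nA. K $$ (mm,c) * Zh i k c)" .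
    qed
    finally show ?thesis by (simp add: right_diff_distrib sum_subtractf)
  qed
  have RE: "E i (Suc k) l = (\<Sum>c<nA. (A - H * C) $$ (l,c) * E i k c) + (\<Sum>mm<mA. B $$ (l,mm) * dD i k mm)"
    if i: "i < N" and l: "l < nA" for i k l
  proof -
    have e1: "(\<Sum>c<nA. A $$ (l,c) * Eps i k c) - (\<Sum>c<nA. A $$ (l,c) * Xh i k c) = (\<Sum>c<nA. A $$ (l,c) * E i k c)"
      unfolding E_def by (simp add: right_diff_distrib sum_subtractf)
    have e2: "(\<Sum>qq<p. H $$ (l,qq) * ((\<Sum>c<nA. C $$ (qq,c) * Eps i k c) - (\<Sum>c<nA. C $$ (qq,c) * Xh i k c)))
       = (\<Sum>c<nA. (\<Sum>qq<p. H $$ (l,qq) * C $$ (qq,c)) * E i k c)"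
    proof -
      have "(\<Sum>qq<p. H $$ (l,qq) * ((\<Sum>c<nA. C $$ (qq,c) * Eps i k c) - (\<Sum>c<nA. C $$ (qq,c) * Xh i k c)))
          = (\<Sum>qq<p. H $$ (l,qq) * (\<Sum>c<nA. C $$ (qq,c) * E i k c))"
        unfolding E_def by (simp add: right_diff_distrib sum_subtractf)
      also have "\<dots> = (\<Sum>c<nA. (\<Sum>qq<p. H $$ (l,qq) * C $$ (qq,c)) * E i k c)" by (rule swap1)
      finally show ?thesis .
    qed
    have e3: "(\<Sum>c<nA. (A - H * C) $$ (l,c) * E i k c) = (\<Sum>c<nA. A $$ (l,c) * E i k c) - (\<Sum>c<nA. (\<Sum>qq<p. H $$ (l,qq) * C $$ (qq,c)) * E i k c)"
    proof -
      have "(\<Sum>c<nA. (A - H * C) $$ (l,c) * E i k c) = (\<Sum>c<nA. (A $$ (l,c) - (\<Sum>qq<p. H $$ (l,qq) * C $$ (qq,c))) * E i k c)"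
      proof (intro sum.cong refl)
        fix c assume "c \<in> {..<nA}"
        hence c: "c < nA" by simp
        have "(A - H * C) $$ (l,c) = A $$ (l,c) - (H * C) $$ (l,c)"
          by (rule minus_entry[OF Ac _ l c]) (use H_dim Cc in auto)
        also have "(H * C) $$ (l,c) = (\<Sum>qq<p. H $$ (l,qq) * C $$ (qq,c))" by (rule mult_entry[OF H_dim Cc l c])
        finally show "(A - H * C) $$ (l,c) * E i k c = (A $$ (l,c) - (\<Sum>qq<p. H $$ (l,qq) * C $$ (qq,c))) * E i k c" by simp
      qed
      thus ?thesis by (simp add: left_diff_distrib sum_subtractf)
    qed
    show ?thesis unfolding E_def[of i "Suc k" l] EpsRec[OF i l] RXh[OF i l] e3
      using e1 e2 unfolding E_def by linarith
  qed
  have HC: "A - H * C \<in> carrier_mat nA nA" using Ac H_dim Cc by auto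
  have E0: "(\<lambda>k. E i k l) \<longlonglongrightarrow> 0" if i: "i < N" and l: "l < nA" for i l
    by (rule schur_input_to_zero[where z = "E i" and u = "\<lambda>k l. \<Sum>mm<mA. B $$ (l,mm) * dD i k mm", OF HC H_stab _ _ l])
       (use RE[OF i] dD0[OF i] in \<open>auto intro!: tendsto_null_sum tendsto_mult_right_zero\<close>)
  define Phi where "Phi k i l = X i k l - Eta i k l" for k i l
  have EpsZh: "Eps i k c - Zh i k c = Phi k i c - Dop N d (\<lambda>j. Phi k j c) i" if i: "i < N" for i k c
  proof -
    have "Eps i k c - Zh i k c = (\<Sum>j<N. d i j * (Phi k i c - Phi k j c))"
      unfolding Eps_def Zh_def Phi_def by (simp add: sum_subtractf[symmetric] algebra_simps)
    also have "\<dots> = (\<Sum>j<N. d i j) * Phi k i c - Dop N d (\<lambda>j. Phi k j c) i"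
    proof -
      have "(\<Sum>j<N. d i j * Phi k i c) = (\<Sum>j<N. d i j) * Phi k i c" by (simp add: sum_distrib_right)
      thus ?thesis unfolding Dop_def by (simp add: right_diff_distrib sum_subtractf)
    qed
    finally show ?thesis using drow[OF i] by simp
  qed
  have RPhi: "Phi (Suc k) i l = (\<Sum>c<nA. A $$ (l,c) * Dop N d (\<lambda>j. Phi k j c) i)
      + ((\<Sum>c<nA. A $$ (l,c) * E i k c) + (\<Sum>mm<mA. B $$ (l,mm) * Dist i k mm))"
    if i: "i < N" and l: "l < nA" for k i l
  proof -
    have BK: "(\<Sum>c<nA. (A - B * K) $$ (l,c) * Eta i k c) = (\<Sum>c<nA. A $$ (l,c) * Eta i k c) - (\<Sum>mm<mA. B $$ (l,mm) * W i k mm)"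
    proof -
      have "(\<Sum>c<nA. (A - B * K) $$ (l,c) * Eta i k c) = (\<Sum>c<nA. (A $$ (l,c) - (\<Sum>mm<mA. B $$ (l,mm) * K $$ (mm,c))) * Eta i k c)"
      proof (intro sum.cong refl)
        fix c assume "c \<in> {..<nA}"
        hence c: "c < nA" by simp
        have "(A - B * K) $$ (l,c) = A $$ (l,c) - (B * K) $$ (l,c)"
          by (rule minus_entry[OF Ac _ l c]) (use Bc K_dim in auto)
        also have "(B * K) $$ (l,c) = (\<Sum>mm<mA. B $$ (l,mm) * K $$ (mm,c))" by (rule mult_entry[OF Bc K_dim l c])
        finally show "(A - B * K) $$ (l,c) * Eta i k c = (A $$ (l,c) - (\<Sum>mm<mA. B $$ (l,mm) * K $$ (mm,c))) * Eta i k c" by simp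
      qed
      also have "\<dots> = (\<Sum>c<nA. A $$ (l,c) * Eta i k c) - (\<Sum>c<nA. (\<Sum>mm<mA. B $$ (l,mm) * K $$ (mm,c)) * Eta i k c)"
        by (simp add: left_diff_distrib sum_subtractf)
      also have "(\<Sum>c<nA. (\<Sum>mm<mA. B $$ (l,mm) * K $$ (mm,c)) * Eta i k c) = (\<Sum>mm<mA. B $$ (l,mm) * W i k mm)"
        unfolding W_def by (rule swap1[symmetric])
      finally show ?thesis .
    qed
    have XZ: "X i k c - Eta i k c - Xh i k c + Zh i k c = Dop N d (\<lambda>j. Phi k j c) i + E i k c" for c
      using EpsZh[OF i, of k c] unfolding E_def Phi_def by linarith
    have "Phi (Suc k) i l = (\<Sum>c<nA. A $$ (l,c) * X i k c) + ((\<Sum>mm<mA. B $$ (l,mm) * Dist i k mm) - (\<Sum>mm<mA. B $$ (l,mm) * W i k mm))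
        - ((\<Sum>c<nA. A $$ (l,c) * Eta i k c) - (\<Sum>mm<mA. B $$ (l,mm) * W i k mm) + (\<Sum>c<nA. A $$ (l,c) * Xh i k c) - (\<Sum>c<nA. A $$ (l,c) * Zh i k c))"
      unfolding Phi_def RX[OF i l] REta[OF i l] BK by (simp add: right_diff_distrib sum_subtractf)
    also have "\<dots> = (\<Sum>c<nA. A $$ (l,c) * (X i k c - Eta i k c - Xh i k c + Zh i k c)) + (\<Sum>mm<mA. B $$ (l,mm) * Dist i k mm)"
      by (simp add: algebra_simps sum.distrib sum_subtractf)
    also have "\<dots> = (\<Sum>c<nA. A $$ (l,c) * Dop N d (\<lambda>j. Phi k j c) i)
      + ((\<Sum>c<nA. A $$ (l,c) * E i k c) + (\<Sum>mm<mA. B $$ (l,mm) * Dist i k mm))"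
      unfolding XZ by (simp add: algebra_simps sum.distrib)
    finally show ?thesis .
  qed
  have Phi0: "(\<lambda>k. Phi k i l - Phi k i' l) \<longlonglongrightarrow> 0" if i: "i < N" and i': "i' < N" and l: "l < nA" for i i' l
  proof (rule stoch.net_converge[OF st g0 _ _ r0 L0 _ gL Ac _ _ _ i i' l])
    show "\<And>i. i < N \<Longrightarrow> \<gamma> \<le> d i i" using gd by auto
    show "\<And>i. i < N \<Longrightarrow> i \<noteq> r0 \<Longrightarrow> par i < N \<and> \<gamma> \<le> d i (par i)" using gp by auto
    show "\<And>i. i < N \<Longrightarrow> \<exists>m\<le>L. (par ^^ m) i = r0" using Lp by auto
    show "\<And>ev. eigenvalue (map_mat complex_of_real A) ev \<Longrightarrow> cmod ev \<le> 1" using A_disc by auto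
    show "\<And>k i l. i < N \<Longrightarrow> l < nA \<Longrightarrow> Phi (Suc k) i l = (\<Sum>c<nA. A $$ (l,c) * Dop N d (\<lambda>j. Phi k j c) i)
      + (\<lambda>k i l. (\<Sum>c<nA. A $$ (l,c) * E i k c) + (\<Sum>mm<mA. B $$ (l,mm) * Dist i k mm)) k i l"
      using RPhi by simp
    show "\<And>j c. j < N \<Longrightarrow> c < nA \<Longrightarrow> (\<lambda>k. (\<lambda>k i l. (\<Sum>c<nA. A $$ (l,c) * E i k c) + (\<Sum>mm<mA. B $$ (l,mm) * Dist i k mm)) k j c) \<longlonglongrightarrow> 0"
      using E0 Dist0 by (auto intro!: tendsto_add_zero tendsto_null_sum tendsto_mult_right_zero)
  qed
  have BKc: "A - B * K \<in> carrier_mat nA nA" using Ac Bc K_dim by auto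
  have Eta0: "(\<lambda>k. Eta i k l) \<longlonglongrightarrow> 0" if i: "i < N" and l: "l < nA" for i l
  proof (rule schur_input_to_zero[where z = "Eta i" and u = "\<lambda>k l. \<Sum>c<nA. A $$ (l,c) * ((Phi k i c - Dop N d (\<lambda>j. Phi k j c) i) - E i k c)", OF BKc K_stab _ _ l])
    show "\<And>k l. l < nA \<Longrightarrow> Eta i (Suc k) l = (\<Sum>c<nA. (A - B * K) $$ (l,c) * Eta i k c) + (\<Sum>c<nA. A $$ (l,c) * ((Phi k i c - Dop N d (\<lambda>j. Phi k j c) i) - E i k c))"
    proof -
      fix k l assume l: "l < nA"
      have "(\<Sum>c<nA. A $$ (l,c) * ((Phi k i c - Dop N d (\<lambda>j. Phi k j c) i) - E i k c)) = (\<Sum>c<nA. A $$ (l,c) * Xh i k c) - (\<Sum>c<nA. A $$ (l,c) * Zh i k c)"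
        unfolding EpsZh[OF i, symmetric] E_def by (simp add: algebra_simps sum_subtractf)
      thus "Eta i (Suc k) l = (\<Sum>c<nA. (A - B * K) $$ (l,c) * Eta i k c) + (\<Sum>c<nA. A $$ (l,c) * ((Phi k i c - Dop N d (\<lambda>j. Phi k j c) i) - E i k c))"
        using REta[OF i l] by simp
    qed
    show "\<And>l. l < nA \<Longrightarrow> (\<lambda>k. \<Sum>c<nA. A $$ (l,c) * ((Phi k i c - Dop N d (\<lambda>j. Phi k j c) i) - E i k c)) \<longlonglongrightarrow> 0"
    proof -
      fix l assume l: "l < nA"
      have P: "(\<lambda>k. Phi k i c - Dop N d (\<lambda>j. Phi k j c) i) \<longlonglongrightarrow> 0" if c: "c < nA" for c
      proof -
        have eq: "Phi k i c - Dop N d (\<lambda>j. Phi k j c) i = (\<Sum>j<N. d i j * (Phi k i c - Phi k j c))" for k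
          using EpsZh[OF i, of k c] unfolding Eps_def Zh_def Phi_def by (simp add: sum_subtractf[symmetric] algebra_simps)
        show ?thesis unfolding eq
          by (rule tendsto_null_sum, rule tendsto_mult_right_zero, rule Phi0[OF i _ c]) auto
      qed
      show "(\<lambda>k. \<Sum>c<nA. A $$ (l,c) * ((Phi k i c - Dop N d (\<lambda>j. Phi k j c) i) - E i k c)) \<longlonglongrightarrow> 0"
        by (rule tendsto_null_sum, rule tendsto_mult_right_zero, rule tendsto_diff[of _ 0 _ _ 0, simplified])
           (use P E0[OF i] in auto)
    qed
  qed
  show ?thesis
  proof (intro allI impI)
    fix i j l assume i: "i < N" and j: "j < N" and l: "l < p"
    have eq: "(Cg i *\<^sub>v x i k) $ l - (Cg j *\<^sub>v x j k) $ l =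
       (\<Sum>c<nA. C $$ (l,c) * ((Phi k i c - Phi k j c) + (Eta i k c - Eta j k c)))" for k
      unfolding Outs[OF i l] Outs[OF j l] Phi_def by (simp add: algebra_simps sum_subtractf)
    show "(\<lambda>k. (Cg i *\<^sub>v x i k) $ l - (Cg j *\<^sub>v x j k) $ l) \<longlonglongrightarrow> 0"
      unfolding eq
      by (rule tendsto_null_sum, rule tendsto_mult_right_zero, rule tendsto_add_zero, rule Phi0[OF i j],
          simp, rule tendsto_diff[of _ 0 _ _ 0, simplified]) (use Eta0 i j in auto)
  qed
qed

end
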